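(* Let $P$ be a Markovian kernel on a measurable space $(E,\mathcal{B})$, $S_n=\frac1n\sum_{k=0}^{n-1}P^k$, and $\mathcal{B}_1^+$ the set of $\mathcal{B}$-measurable $f$ with $0\le f\le1$. (i) If Assumption A holds with function $V$, then for every $N>0$ there exist $n_0>0$ and $\delta\in[0,1)$ such that $P^nf(y)\le P^{n'}f(x)+\delta$ for all $n,n'\ge n_0$, all $x,y\in[V<N]$ and all $f\in\mathcal{B}_1^+$. (ii) If Assumption A$'$ holds with function $V$, then for every $N>0$ there exist $n_0>0$ and $\delta\in[0,1)$ such that $S_nf(y)\le S_{n'}f(x)+\delta$ for all $n,n'\ge n_0$, $x,y\in[V<N]$, $f\in\mathcal{B}_1^+$. In particular, if Assumption A (resp. A$'$) holds, then Assumption C$'$ holds for the kernel $P^n$ (resp. $S_n$) whenever $n$ is sufficiently large. (iii) If Assumption B(i) holds with set $C$, then for every nonzero finite positive measure $m$ on $(E,\mathcal{B})$ there exists $n_0>0$ with $\inf_{n\ge n_0}m(S_n1_C)>0$ (i.e. Assumption C$'$(ii) holds with respect to $m$ and $C$).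
   Context: A set $C\in\mathcal{B}$ is small for a Markov kernel $Q$ if there exist $\alpha\in(0,1]$ and a probability $\nu$ with $Q(x,\cdot)\ge\alpha\nu(\cdot)$ for all $x\in C$. Assumption A: there exist a positive measurable $V$ and constants $b\ge0$, $\gamma\in(0,1)$ with $PV\le\gamma V+b$ on $E$, and $[V\le r]$ is small for $P$ for some $r>2b/(1-\gamma)$. Assumption A$'$: there exist a measurable $V\ge1$, constants $b\ge0$, $\gamma\in(0,1)$, and a small set $S$ for $P$ such that $PV\le\gamma V+b1_S$ on $E$. Assumption B(i): there exist a measurable $V:E\to[0,\infty)$, a finite constant $b$ and $C\in\mathcal{B}$ with $PV\le V-1+b1_C$ on $E$. Assumption C$'$ for a Markov kernel $Q$: (i) there exist a finite positive measure $m$, a set $C\in\mathcal{B}$, a continuous $\phi:[0,\infty)\to[0,\infty)$ with $\phi(0)=0$, and $\delta\in[0,1)$ with $Qf(x)\le\phi(m(f))+\delta$ for all $f\in\mathcal{B}_1^+$, $x\in C$; (ii) there is $n_0>0$ with $\inf_{n\ge n_0}m(S^Q_n1_C)>0$, where $S^Q_n=\frac1n\sum_{k=0}^{n-1}Q^k$. *)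

theory Defs
  imports "HOL-Probability.Probability"
begin

definition markov_kernel :: "'a measure \<Rightarrow> ('a \<Rightarrow> 'a measure) \<Rightarrow> bool" where
  "markov_kernel M K \<longleftrightarrow> K \<in> M \<rightarrow>\<^sub>M prob_algebra M"

definition kop :: "('a \<Rightarrow> 'a measure) \<Rightarrow> ('a \<Rightarrow> real) \<Rightarrow> 'a \<Rightarrow> real" where
  "kop K f x = (\<integral>y. f y \<partial>K x)"

definition savg :: "(('a \<Rightarrow> real) \<Rightarrow> 'a \<Rightarrow> real) \<Rightarrow> nat \<Rightarrow> ('a \<Rightarrow> real) \<Rightarrow> 'a \<Rightarrow> real" where
  "savg Q n f x = (1 / real n) * (\<Sum>k<n. (Q ^^ k) f x)"

definition B1p :: "'a measure \<Rightarrow> ('a \<Rightarrow> real) set" where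
  "B1p M = {f. f \<in> borel_measurable M \<and> (\<forall>x\<in>space M. 0 \<le> f x \<and> f x \<le> 1)}"

definition small_set :: "'a measure \<Rightarrow> ('a \<Rightarrow> 'a measure) \<Rightarrow> 'a set \<Rightarrow> bool" where
  "small_set M K C \<longleftrightarrow> C \<in> sets M \<and>
     (\<exists>\<alpha> \<nu>. 0 < \<alpha> \<and> \<alpha> \<le> 1 \<and> prob_space \<nu> \<and> sets \<nu> = sets M \<and>
        (\<forall>x\<in>C. \<forall>A\<in>sets M. \<alpha> * measure \<nu> A \<le> measure (K x) A))"

definition assmA :: "'a measure \<Rightarrow> ('a \<Rightarrow> 'a measure) \<Rightarrow> ('a \<Rightarrow> real) \<Rightarrow> bool" where
  "assmA M K V \<longleftrightarrow> V \<in> borel_measurable M \<and> (\<forall>x\<in>space M. 0 \<le> V x) \<and>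
     (\<exists>b \<gamma> r. 0 \<le> b \<and> 0 < \<gamma> \<and> \<gamma> < 1 \<and>
        (\<forall>x\<in>space M. (\<integral>\<^sup>+ y. ennreal (V y) \<partial>K x) \<le> ennreal (\<gamma> * V x + b)) \<and>
        r > 2 * b / (1 - \<gamma>) \<and> small_set M K {x\<in>space M. V x \<le> r})"

definition assmA' :: "'a measure \<Rightarrow> ('a \<Rightarrow> 'a measure) \<Rightarrow> ('a \<Rightarrow> real) \<Rightarrow> bool" where
  "assmA' M K V \<longleftrightarrow> V \<in> borel_measurable M \<and> (\<forall>x\<in>space M. 1 \<le> V x) \<and>
     (\<exists>b \<gamma> S. 0 \<le> b \<and> 0 < \<gamma> \<and> \<gamma> < 1 \<and> small_set M K S \<and>
        (\<forall>x\<in>space M. (\<integral>\<^sup>+ y. ennreal (V y) \<partial>K x) \<le> ennreal (\<gamma> * V x + b * indicator S x)))"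

text \<open>Assumption B(i): PV <= V - 1 + b 1_C, written as PV + 1 <= V + b 1_C
  (exact also when the right-hand side would be negative).\<close>
definition assmB :: "'a measure \<Rightarrow> ('a \<Rightarrow> 'a measure) \<Rightarrow> ('a \<Rightarrow> real) \<Rightarrow> real \<Rightarrow> 'a set \<Rightarrow> bool" where
  "assmB M K V b C \<longleftrightarrow> V \<in> borel_measurable M \<and> (\<forall>x\<in>space M. 0 \<le> V x) \<and> C \<in> sets M \<and>
     (\<forall>x\<in>space M. (\<integral>\<^sup>+ y. ennreal (V y) \<partial>K x) + 1 \<le> ennreal (V x + b * indicator C x))"

definition assmC' :: "'a measure \<Rightarrow> (('a \<Rightarrow> real) \<Rightarrow> 'a \<Rightarrow> real) \<Rightarrow> bool" where
  "assmC' M Q \<longleftrightarrow>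
     (\<exists>m C \<phi> \<delta>. finite_measure m \<and> sets m = sets M \<and> C \<in> sets M \<and>
        continuous_on {0..} \<phi> \<and> (\<forall>t\<ge>0. 0 \<le> \<phi> t) \<and> \<phi> 0 = 0 \<and>
        0 \<le> \<delta> \<and> \<delta> < 1 \<and>
        (\<forall>f\<in>B1p M. \<forall>x\<in>C. Q f x \<le> \<phi> (\<integral>y. f y \<partial>m) + \<delta>) \<and>
        (\<exists>n0::nat. n0 > 0 \<and> (INF n\<in>{n0..}. \<integral>y. savg Q n (indicator C) y \<partial>m) > 0))"

end

theory Submission
  imports Defs
begin

definition bm :: "'a measure \<Rightarrow> ('a \<Rightarrow> real) \<Rightarrow> bool" where
  "bm M f \<longleftrightarrow> f \<in> borel_measurable M \<and> (\<exists>B. \<forall>x\<in>space M. \<bar>f x\<bar> \<le> B)"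

definition op_ok :: "'a measure \<Rightarrow> (('a \<Rightarrow> real) \<Rightarrow> 'a \<Rightarrow> real) \<Rightarrow> bool" where
  "op_ok M Q \<longleftrightarrow> (\<forall>f. bm M f \<longrightarrow> bm M (Q f)) \<and>
   (\<forall>f g x. bm M f \<longrightarrow> bm M g \<longrightarrow> x\<in>space M \<longrightarrow> Q (\<lambda>z. f z + g z) x = Q f x + Q g x) \<and>
   (\<forall>f c x. bm M f \<longrightarrow> x\<in>space M \<longrightarrow> Q (\<lambda>z. c * f z) x = c * Q f x) \<and>
   (\<forall>c x. x\<in>space M \<longrightarrow> Q (\<lambda>z. c) x = c) \<and>
   (\<forall>f g x. bm M f \<longrightarrow> bm M g \<longrightarrow> (\<forall>z\<in>space M. f z \<le> g z) \<longrightarrow> x\<in>space M \<longrightarrow> Q f x \<le> Q g x)"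

lemma bm_const[simp]: "bm M (\<lambda>x. c)"
  unfolding bm_def by auto

lemma bm_add: "bm M f \<Longrightarrow> bm M g \<Longrightarrow> bm M (\<lambda>x. f x + g x)"
  unfolding bm_def
proof (elim conjE exE, intro conjI)
  fix B1 B2 assume "\<forall>x\<in>space M. \<bar>f x\<bar> \<le> B1" "\<forall>x\<in>space M. \<bar>g x\<bar> \<le> B2"
  then show "\<exists>B. \<forall>x\<in>space M. \<bar>f x + g x\<bar> \<le> B"
    by (intro exI[of _ "B1+B2"]) (auto intro: order_trans[OF abs_triangle_ineq] add_mono)
qed auto

lemma bm_mult: "bm M f \<Longrightarrow> bm M (\<lambda>x. c * f x)"
  unfolding bm_def
proof (elim conjE exE, intro conjI)
  fix B1 assume "\<forall>x\<in>space M. \<bar>f x\<bar> \<le> B1"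
  then show "\<exists>B. \<forall>x\<in>space M. \<bar>c * f x\<bar> \<le> B"
    by (intro exI[of _ "\<bar>c\<bar>*B1"]) (auto simp: abs_mult intro: mult_left_mono)
qed auto

lemma bm_minus: "bm M f \<Longrightarrow> bm M g \<Longrightarrow> bm M (\<lambda>x. f x - g x)"
  using bm_add[of M f "\<lambda>x. (-1) * g x"] bm_mult[of M g "-1"] by simp

lemma bm_sum: "(\<And>i. i \<in> I \<Longrightarrow> bm M (f i)) \<Longrightarrow> bm M (\<lambda>x. \<Sum>i\<in>I. f i x)"
proof (induction I rule: infinite_finite_induct)
  case (insert i I) then show ?case by (simp add: bm_add)
qed auto

lemma bm_indicator: "A \<in> sets M \<Longrightarrow> bm M (indicator A)"
  unfolding bm_def by (auto intro!: exI[of _ 1] simp: indicator_def)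

lemma min_abs_aux: "\<bar>a::real\<bar> \<le> B \<Longrightarrow> \<bar>min a c\<bar> \<le> B + \<bar>c\<bar>"
  unfolding min_def abs_if by (auto split: if_split_asm)

lemma bm_min: "bm M f \<Longrightarrow> bm M (\<lambda>x. min (f x) c)"
  unfolding bm_def
proof (elim conjE exE, intro conjI)
  fix B1 assume "\<forall>x\<in>space M. \<bar>f x\<bar> \<le> B1"
  then show "\<exists>B. \<forall>x\<in>space M. \<bar>min (f x) c\<bar> \<le> B"
    by (intro exI[of _ "B1+\<bar>c\<bar>"] ballI) (simp add: min_abs_aux)
next
  assume "f \<in> borel_measurable M"
  then show "(\<lambda>x. min (f x) c) \<in> borel_measurable M" by (intro borel_measurable_min) auto
qed


lemma bm_cong: "bm M f \<Longrightarrow> (\<And>x. x \<in> space M \<Longrightarrow> f x = g x) \<Longrightarrow> bm M g"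
proof -
  assume f: "bm M f" and eq: "\<And>x. x \<in> space M \<Longrightarrow> f x = g x"
  have fm: "f \<in> borel_measurable M" using f by (simp add: bm_def)
  have "g \<in> borel_measurable M" using fm measurable_cong[of M f g, OF eq] by simp
  moreover obtain B where "\<forall>x\<in>space M. \<bar>f x\<bar> \<le> B" using f unfolding bm_def by blast
  then have "\<forall>x\<in>space M. \<bar>g x\<bar> \<le> B" using eq by simp
  ultimately show ?thesis unfolding bm_def by blast
qed

lemma bm_measurable: "bm M f \<Longrightarrow> f \<in> borel_measurable M"
  unfolding bm_def by auto

lemma op_okD:
  assumes "op_ok M Q"
  shows "bm M f \<Longrightarrow> bm M (Q f)"
    and "bm M f \<Longrightarrow> bm M g \<Longrightarrow> x\<in>space M \<Longrightarrow> Q (\<lambda>z. f z + g z) x = Q f x + Q g x"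
    and "bm M f \<Longrightarrow> x\<in>space M \<Longrightarrow> Q (\<lambda>z. c * f z) x = c * Q f x"
    and "x\<in>space M \<Longrightarrow> Q (\<lambda>z. c) x = c"
    and "bm M f \<Longrightarrow> bm M g \<Longrightarrow> (\<And>z. z\<in>space M \<Longrightarrow> f z \<le> g z) \<Longrightarrow> x\<in>space M \<Longrightarrow> Q f x \<le> Q g x"
  using assms unfolding op_ok_def by simp_all

lemma op_ok_cong:
  assumes "op_ok M Q" "bm M f" "\<And>z. z\<in>space M \<Longrightarrow> f z = g z" "x \<in> space M"
  shows "Q f x = Q g x"
proof -
  have g: "bm M g" using bm_cong assms by blast
  show ?thesis using op_okD(5)[OF assms(1) assms(2) g _ assms(4)] op_okD(5)[OF assms(1) g assms(2) _ assms(4)]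
    assms(3) by (simp add: order_antisym)
qed

lemma op_ok_minus:
  assumes "op_ok M Q" "bm M f" "bm M g" "x \<in> space M"
  shows "Q (\<lambda>z. f z - g z) x = Q f x - Q g x"
proof -
  have e: "(\<lambda>z. f z - g z) = (\<lambda>z. f z + (-1) * g z)" by simp
  have "Q (\<lambda>z. f z - g z) x = Q (\<lambda>z. f z + (-1) * g z) x" by (subst e) (rule refl)
  also have "\<dots> = Q f x + Q (\<lambda>z. (-1) * g z) x"
    by (rule op_okD(2)[OF assms(1) assms(2) bm_mult[OF assms(3), of "-1"] assms(4)])
  also have "\<dots> = Q f x - Q g x" using op_okD(3)[OF assms(1) assms(3) assms(4), of "-1"] by simp
  finally show ?thesis .
qed

lemma op_ok_sum:
  assumes "op_ok M Q" "\<And>i. i \<in> I \<Longrightarrow> bm M (f i)" "x \<in> space M"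
  shows "Q (\<lambda>z. \<Sum>i\<in>I. f i z) x = (\<Sum>i\<in>I. Q (f i) x)"
  using assms(2)
proof (induction I rule: infinite_finite_induct)
  case (infinite A)
  then show ?case using op_okD(4)[OF assms(1) assms(3), of 0] by simp
next
  case empty
  then show ?case using op_okD(4)[OF assms(1) assms(3), of 0] by simp
next
  case (insert i I)
  have "Q (\<lambda>z. \<Sum>i\<in>insert i I. f i z) x = Q (\<lambda>z. f i z + (\<Sum>i\<in>I. f i z)) x"
    using insert by simp
  also have "\<dots> = Q (f i) x + Q (\<lambda>z. \<Sum>i\<in>I. f i z) x"
    using op_okD(2)[OF assms(1) _ bm_sum assms(3), of "f i" I f] insert by simp
  finally show ?case using insert by simp
qed

lemma op_ok_id: "op_ok M (\<lambda>f. f)"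
  unfolding op_ok_def by auto

lemma op_ok_comp:
  assumes Q: "op_ok M Q" and R: "op_ok M R"
  shows "op_ok M (\<lambda>f. Q (R f))"
  unfolding op_ok_def
proof (intro conjI allI impI)
  fix f assume f: "bm M f" then show "bm M (Q (R f))" by (rule op_okD(1)[OF Q op_okD(1)[OF R]])
next
  fix f g x assume f: "bm M f" and g: "bm M g" and x: "x \<in> space M"
  have "Q (R (\<lambda>z. f z + g z)) x = Q (\<lambda>z. R f z + R g z) x"
    by (rule op_ok_cong[OF Q op_okD(1)[OF R bm_add[OF f g]] op_okD(2)[OF R f g] x])
  also have "\<dots> = Q (R f) x + Q (R g) x" using op_okD(2)[OF Q op_okD(1)[OF R f] op_okD(1)[OF R g] x] .
  finally show "Q (R (\<lambda>z. f z + g z)) x = Q (R f) x + Q (R g) x" .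
next
  fix f c x assume f: "bm M f" and x: "x \<in> space M"
  have "Q (R (\<lambda>z. c * f z)) x = Q (\<lambda>z. c * R f z) x"
    by (rule op_ok_cong[OF Q op_okD(1)[OF R bm_mult[OF f]] op_okD(3)[OF R f] x])
  also have "\<dots> = c * Q (R f) x" using op_okD(3)[OF Q op_okD(1)[OF R f] x] .
  finally show "Q (R (\<lambda>z. c * f z)) x = c * Q (R f) x" .
next
  fix c :: real and x assume x: "x \<in> space M"
  have "Q (R (\<lambda>z. c)) x = Q (\<lambda>z. c) x"
    by (rule op_ok_cong[OF Q op_okD(1)[OF R bm_const] op_okD(4)[OF R] x])
  then show "Q (R (\<lambda>z. c)) x = c" using op_okD(4)[OF Q x] by simp
next
  fix f g x assume f: "bm M f" and g: "bm M g" and le: "\<forall>z\<in>space M. f z \<le> g z" and x: "x \<in> space M"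
  have le': "\<And>z. z \<in> space M \<Longrightarrow> f z \<le> g z" using le by simp
  show "Q (R f) x \<le> Q (R g) x"
    by (rule op_okD(5)[OF Q op_okD(1)[OF R f] op_okD(1)[OF R g] op_okD(5)[OF R f g le'] x])
qed

lemma op_ok_funpow: "op_ok M Q \<Longrightarrow> op_ok M (Q ^^ k)"
proof (induction k)
  case 0 then show ?case using op_ok_id by (simp add: id_def)
next
  case (Suc k)
  have "op_ok M (\<lambda>f. Q ((Q^^k) f))" using op_ok_comp[OF Suc.prems Suc.IH[OF Suc.prems]] .
  then show ?case by (simp add: comp_def)
qed

lemma op_ok_savg:
  assumes Q: "op_ok M Q" and n: "n > 0"
  shows "op_ok M (savg Q n)"
  unfolding op_ok_def savg_def
proof (intro conjI allI impI)
  fix f assume "bm M f" then show "bm M (\<lambda>x. 1 / real n * (\<Sum>k<n. (Q ^^ k) f x))"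
    by (intro bm_mult bm_sum op_okD(1)[OF op_ok_funpow[OF Q]]) (rule \<open>bm M f\<close>)
next
  fix f g x assume f: "bm M f" and g: "bm M g" and x: "x \<in> space M"
  show "1 / real n * (\<Sum>k<n. (Q ^^ k) (\<lambda>z. f z + g z) x) =
    1 / real n * (\<Sum>k<n. (Q ^^ k) f x) + 1 / real n * (\<Sum>k<n. (Q ^^ k) g x)"
    using op_okD(2)[OF op_ok_funpow[OF Q] f g x] by (simp add: sum.distrib distrib_left)
next
  fix f c x assume f: "bm M f" and x: "x \<in> space M"
  show "1 / real n * (\<Sum>k<n. (Q ^^ k) (\<lambda>z. c * f z) x) = c * (1 / real n * (\<Sum>k<n. (Q ^^ k) f x))"
    using op_okD(3)[OF op_ok_funpow[OF Q] f x] by (simp add: sum_distrib_left)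
next
  fix c x assume x: "x \<in> space M"
  show "1 / real n * (\<Sum>k<n. (Q ^^ k) (\<lambda>z. c) x) = c"
    using op_okD(4)[OF op_ok_funpow[OF Q] x] n by simp
next
  fix f g x assume f: "bm M f" and g: "bm M g" and le: "\<forall>z\<in>space M. f z \<le> g z" and x: "x \<in> space M"
  show "1 / real n * (\<Sum>k<n. (Q ^^ k) f x) \<le> 1 / real n * (\<Sum>k<n. (Q ^^ k) g x)"
    using op_okD(5)[OF op_ok_funpow[OF Q] f g _ x] le by (intro mult_left_mono sum_mono) auto
qed

lemma markov_kernel_facts:
  assumes "markov_kernel M K" "x \<in> space M"
  shows "prob_space (K x)" "sets (K x) = sets M" "space (K x) = space M"
  using measurable_space[OF assms(1)[unfolded markov_kernel_def] assms(2)]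
  by (auto simp: space_prob_algebra dest: sets_eq_imp_space_eq)

lemma kernel_integrable:
  assumes "markov_kernel M K" "x \<in> space M" "bm M f"
  shows "integrable (K x) f"
proof -
  interpret prob_space "K x" using markov_kernel_facts[OF assms(1,2)] by simp
  obtain B where B: "\<forall>z\<in>space M. \<bar>f z\<bar> \<le> B" and m: "f \<in> borel_measurable M" using assms(3) unfolding bm_def by blast
  show ?thesis
  proof (rule integrable_const_bound[of _ B])
    show "AE z in K x. norm (f z) \<le> B" using B markov_kernel_facts[OF assms(1,2)] by auto
    show "f \<in> borel_measurable (K x)" using m measurable_cong_sets markov_kernel_facts[OF assms(1,2)] by blast
  qed
qed

lemma op_ok_kop:
  assumes K: "markov_kernel M K"
  shows "op_ok M (kop K)"
  unfolding op_ok_def kop_def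
proof (intro conjI allI impI)
  fix f assume f: "bm M f"
  have Ks: "K \<in> M \<rightarrow>\<^sub>M subprob_algebra M" using K unfolding markov_kernel_def by (rule measurable_prob_algebraD)
  have "(\<lambda>x. integral\<^sup>L (K x) f) \<in> borel_measurable M"
    using measurable_compose[OF Ks integral_measurable_subprob_algebra[OF bm_measurable[OF f]]] by (simp add: comp_def)
  moreover obtain B where B: "\<forall>z\<in>space M. \<bar>f z\<bar> \<le> B" using f unfolding bm_def by blast
  moreover have "\<bar>integral\<^sup>L (K x) f\<bar> \<le> B" if x: "x \<in> space M" for x
  proof -
    interpret prob_space "K x" using markov_kernel_facts[OF K x] by simp
    have "\<bar>integral\<^sup>L (K x) f\<bar> \<le> integral\<^sup>L (K x) (\<lambda>z. \<bar>f z\<bar>)"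
      by (rule integral_abs_bound)
    also have "\<dots> \<le> integral\<^sup>L (K x) (\<lambda>z. B)"
      using B markov_kernel_facts[OF K x] kernel_integrable[OF K x f]
      by (intro integral_mono) auto
    finally show ?thesis using prob_space by simp
  qed
  ultimately show "bm M (\<lambda>x. integral\<^sup>L (K x) f)" unfolding bm_def by blast
next
  fix f g x assume f: "bm M f" and g: "bm M g" and x: "x \<in> space M"
  show "(\<integral>y. f y + g y \<partial>K x) = integral\<^sup>L (K x) f + integral\<^sup>L (K x) g"
    using kernel_integrable[OF K x f] kernel_integrable[OF K x g] by simp
next
  fix f c x assume f: "bm M f" and x: "x \<in> space M"
  show "(\<integral>y. c * f y \<partial>K x) = c * integral\<^sup>L (K x) f" by simp
next
  fix c :: real and x assume x: "x \<in> space M"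
  interpret prob_space "K x" using markov_kernel_facts[OF K x] by simp
  show "(\<integral>y. c \<partial>K x) = c" using lebesgue_integral_const[of "K x" c] prob_space by simp
next
  fix f g x assume f: "bm M f" and g: "bm M g" and le: "\<forall>z\<in>space M. f z \<le> g z" and x: "x \<in> space M"
  show "integral\<^sup>L (K x) f \<le> integral\<^sup>L (K x) g"
    using kernel_integrable[OF K x f] kernel_integrable[OF K x g] le markov_kernel_facts[OF K x]
    by (intro integral_mono) auto
qed


lemma kop_nn:
  assumes K: "markov_kernel M K" and x: "x \<in> space M" and f: "bm M f" and nn: "\<And>z. z \<in> space M \<Longrightarrow> 0 \<le> f z"
  shows "ennreal (kop K f x) = (\<integral>\<^sup>+ y. ennreal (f y) \<partial>K x)"
proof -
  have "AE y in K x. 0 \<le> f y" using nn markov_kernel_facts(3)[OF K x] by (intro AE_I2) auto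
  then show ?thesis unfolding kop_def
    using nn_integral_eq_integral[OF kernel_integrable[OF K x f]] by simp
qed

definition drift :: "'a measure \<Rightarrow> (('a \<Rightarrow> real) \<Rightarrow> 'a \<Rightarrow> real) \<Rightarrow> ('a \<Rightarrow> real) \<Rightarrow> real \<Rightarrow> ('a \<Rightarrow> real) \<Rightarrow> bool" where
  "drift M Q V \<gamma> h \<longleftrightarrow> (\<forall>c d g x. 0 \<le> c \<longrightarrow> 0 \<le> d \<longrightarrow> bm M g \<longrightarrow>
     (\<forall>z\<in>space M. 0 \<le> g z \<and> g z \<le> c * V z + d) \<longrightarrow> x \<in> space M \<longrightarrow> Q g x \<le> c * (\<gamma> * V x + h x) + d)"

lemma driftD:
  assumes "drift M Q V \<gamma> h" "0 \<le> c" "0 \<le> d" "bm M g" "\<And>z. z\<in>space M \<Longrightarrow> 0 \<le> g z"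
    "\<And>z. z\<in>space M \<Longrightarrow> g z \<le> c * V z + d" "x \<in> space M"
  shows "Q g x \<le> c * (\<gamma> * V x + h x) + d"
  using assms unfolding drift_def by simp

lemma drift_kop:
  assumes K: "markov_kernel M K" and V: "V \<in> borel_measurable M" and Vnn: "\<And>x. x \<in> space M \<Longrightarrow> 0 \<le> V x"
    and pos: "\<And>x. x \<in> space M \<Longrightarrow> 0 \<le> \<gamma> * V x + h x"
    and dr: "\<And>x. x \<in> space M \<Longrightarrow> (\<integral>\<^sup>+ y. ennreal (V y) \<partial>K x) \<le> ennreal (\<gamma> * V x + h x)"
  shows "drift M (kop K) V \<gamma> h"
  unfolding drift_def
proof (intro allI impI)
  fix c d g x assume c: "0 \<le> (c::real)" and d: "0 \<le> (d::real)" and g: "bm M g"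
    and gb: "\<forall>z\<in>space M. 0 \<le> g z \<and> g z \<le> c * V z + d" and x: "x \<in> space M"
  interpret prob_space "K x" using markov_kernel_facts[OF K x] by simp
  have sp: "space (K x) = space M" and st: "sets (K x) = sets M" using markov_kernel_facts[OF K x] by auto
  have Vm: "V \<in> borel_measurable (K x)" by (subst measurable_cong_sets[OF st refl]) (rule V)
  have "ennreal (kop K g x) = (\<integral>\<^sup>+ y. ennreal (g y) \<partial>K x)"
    using kop_nn[OF K x g] gb by simp
  also have "\<dots> \<le> (\<integral>\<^sup>+ y. ennreal c * ennreal (V y) + ennreal d \<partial>K x)"
  proof (rule nn_integral_mono)
    fix y assume "y \<in> space (K x)"
    then have "g y \<le> c * V y + d" "0 \<le> V y" using gb Vnn sp by auto
    then show "ennreal (g y) \<le> ennreal c * ennreal (V y) + ennreal d"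
      using c d by (simp add: ennreal_mult'[symmetric] ennreal_plus[symmetric] del: ennreal_plus)
  qed
  also have "\<dots> = ennreal c * (\<integral>\<^sup>+ y. ennreal (V y) \<partial>K x) + ennreal d"
    using Vm by (simp add: nn_integral_add nn_integral_cmult emeasure_space_1)
  also have "\<dots> \<le> ennreal c * ennreal (\<gamma> * V x + h x) + ennreal d"
    using dr[OF x] by (intro add_mono mult_left_mono) auto
  also have "\<dots> = ennreal (c * (\<gamma> * V x + h x) + d)"
    using c d pos[OF x] by (simp add: ennreal_mult'[symmetric] ennreal_plus[symmetric] del: ennreal_plus)
  finally show "kop K g x \<le> c * (\<gamma> * V x + h x) + d"
    using c d pos[OF x] by (subst (asm) ennreal_le_iff) auto
qed

lemma drift_mono:
  assumes "drift M Q V \<gamma> h" "\<And>x. x \<in> space M \<Longrightarrow> h x \<le> h' x"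
  shows "drift M Q V \<gamma> h'"
  unfolding drift_def
proof (intro allI impI)
  fix c d g x assume c: "0 \<le> (c::real)" and d: "0 \<le> (d::real)" and g: "bm M g"
    and gb: "\<forall>z\<in>space M. 0 \<le> g z \<and> g z \<le> c * V z + d" and x: "x \<in> space M"
  have "Q g x \<le> c * (\<gamma> * V x + h x) + d" using driftD[OF assms(1) c d g _ _ x] gb by simp
  also have "\<dots> \<le> c * (\<gamma> * V x + h' x) + d"
  proof -
    have "\<gamma> * V x + h x \<le> \<gamma> * V x + h' x" using assms(2)[OF x] by simp
    then show ?thesis using mult_left_mono[OF _ c] by simp
  qed
  finally show "Q g x \<le> c * (\<gamma> * V x + h' x) + d" .
qed

lemma op_ok_nonneg:
  assumes "op_ok M Q" "bm M g" "\<And>z. z \<in> space M \<Longrightarrow> 0 \<le> g z" "x \<in> space M"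
  shows "0 \<le> Q g x"
  using op_okD(5)[OF assms(1) bm_const assms(2) assms(3) assms(4)] op_okD(4)[OF assms(1) assms(4)] by simp

lemma drift_funpow:
  assumes Q: "op_ok M Q" and dr: "drift M Q V \<gamma> (\<lambda>_. b)" and g0: "0 \<le> \<gamma>" and b0: "0 \<le> b"
  shows "drift M (Q ^^ k) V (\<gamma> ^ k) (\<lambda>_. b * (\<Sum>j<k. \<gamma> ^ j))"
proof (induction k)
  case 0
  show ?case unfolding drift_def by auto
next
  case (Suc k)
  show ?case unfolding drift_def
  proof (intro allI impI)
    fix c d g x assume c: "0 \<le> (c::real)" and d: "0 \<le> (d::real)" and g: "bm M g"
      and gb: "\<forall>z\<in>space M. 0 \<le> g z \<and> g z \<le> c * V z + d" and x: "x \<in> space M"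
    have Qg: "bm M (Q g)" using op_okD(1)[OF Q g] .
    have Qg0: "0 \<le> Q g z" if "z \<in> space M" for z using op_ok_nonneg[OF Q g _ that] gb by simp
    have Qgb: "Q g z \<le> (c * \<gamma>) * V z + (c * b + d)" if "z \<in> space M" for z
      using driftD[OF dr c d g _ _ that] gb by (simp add: algebra_simps)
    have "(Q ^^ Suc k) g x = (Q ^^ k) (Q g) x" by (simp add: funpow_Suc_right del: funpow.simps)
    also have "\<dots> \<le> (c * \<gamma>) * (\<gamma> ^ k * V x + b * (\<Sum>j<k. \<gamma> ^ j)) + (c * b + d)"
      using driftD[OF Suc.IH _ _ Qg Qg0 Qgb x] c d g0 b0 by simp
    also have "\<dots> = c * (\<gamma> ^ Suc k * V x + b * (1 + \<gamma> * (\<Sum>j<k. \<gamma> ^ j))) + d"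
      by (simp add: algebra_simps)
    also have "1 + \<gamma> * (\<Sum>j<k. \<gamma> ^ j) = (\<Sum>j<Suc k. \<gamma> ^ j)"
      by (simp add: sum.lessThan_Suc_shift sum_distrib_left del: sum.lessThan_Suc)
    finally show "(Q ^^ Suc k) g x \<le> c * (\<gamma> ^ Suc k * V x + b * (\<Sum>j<Suc k. \<gamma> ^ j)) + d" .
  qed
qed

lemma minor_kop:
  assumes K: "markov_kernel M K" and a: "0 \<le> \<alpha>" and nu: "prob_space \<nu>" "sets \<nu> = sets M"
    and le: "\<And>A. A \<in> sets M \<Longrightarrow> \<alpha> * measure \<nu> A \<le> measure (K x) A"
    and x: "x \<in> space M" and f: "f \<in> B1p M"
  shows "\<alpha> * (\<integral>y. f y \<partial>\<nu>) \<le> kop K f x"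
proof -
  interpret nu: prob_space \<nu> by (rule nu(1))
  interpret kx: prob_space "K x" using markov_kernel_facts[OF K x] by simp
  have st: "sets (K x) = sets M" and sp: "space (K x) = space M" using markov_kernel_facts[OF K x] by auto
  have spn: "space \<nu> = space M" using nu(2) by (rule sets_eq_imp_space_eq)
  have fm: "f \<in> borel_measurable M" and fb: "\<And>z. z \<in> space M \<Longrightarrow> 0 \<le> f z \<and> f z \<le> 1"
    using f unfolding B1p_def by auto
  have fbm: "bm M f" unfolding bm_def using fm fb by (intro conjI exI[of _ 1]) auto
  have fmn: "f \<in> borel_measurable \<nu>" by (subst measurable_cong_sets[OF nu(2) refl]) (rule fm)
  define D where "D = scale_measure (ennreal \<alpha>) \<nu>"
  have sD: "sets D = sets (K x)" unfolding D_def using st nu(2) by simp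
  have DK: "D \<le> K x"
  proof -
    have "space D = space (K x)" using sD by (rule sets_eq_imp_space_eq)
    moreover have "emeasure D A \<le> emeasure (K x) A" for A
    proof (cases "A \<in> sets M")
      case True
      have "emeasure D A = ennreal \<alpha> * ennreal (measure \<nu> A)"
        unfolding D_def using nu.emeasure_eq_measure by simp
      also have "\<dots> = ennreal (\<alpha> * measure \<nu> A)" using a by (simp add: ennreal_mult')
      also have "\<dots> \<le> ennreal (measure (K x) A)" using le[OF True] by simp
      also have "\<dots> = emeasure (K x) A" using kx.emeasure_eq_measure by simp
      finally show ?thesis .
    next
      case False
      then have "A \<notin> sets D" "A \<notin> sets (K x)" using sD st by auto
      then show ?thesis by (simp add: emeasure_notin_sets)
    qed
    ultimately show ?thesis using sD by (simp add: le_measure_iff le_fun_def)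
  qed
  have "ennreal (\<alpha> * (\<integral>y. f y \<partial>\<nu>)) = ennreal \<alpha> * (\<integral>\<^sup>+ y. ennreal (f y) \<partial>\<nu>)"
  proof -
    have "integrable \<nu> f"
      using fb spn fmn by (intro nu.integrable_const_bound[of _ 1]) auto
    then have "(\<integral>\<^sup>+ y. ennreal (f y) \<partial>\<nu>) = ennreal (\<integral>y. f y \<partial>\<nu>)"
      using fb spn by (intro nn_integral_eq_integral) auto
    then show ?thesis using a by (simp add: ennreal_mult')
  qed
  also have "\<dots> = (\<integral>\<^sup>+ y. ennreal (f y) \<partial>D)"
    unfolding D_def using fmn by (simp add: nn_integral_scale_measure)
  also have "\<dots> \<le> (\<integral>\<^sup>+ y. ennreal (f y) \<partial>K x)"
    by (rule nn_integral_mono_measure[OF sD DK])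
  also have "\<dots> = ennreal (kop K f x)" using kop_nn[OF K x fbm] fb by simp
  finally have "ennreal (\<alpha> * (\<integral>y. f y \<partial>\<nu>)) \<le> ennreal (kop K f x)" .
  moreover have "0 \<le> kop K f x" using op_ok_nonneg[OF op_ok_kop[OF K] fbm _ x] fb by simp
  ultimately show ?thesis by (simp add: ennreal_le_iff)
qed


lemma B1p_bm: "f \<in> B1p M \<Longrightarrow> bm M f"
  unfolding B1p_def bm_def by (auto intro!: exI[of _ 1])

lemma B1pD: "f \<in> B1p M \<Longrightarrow> z \<in> space M \<Longrightarrow> 0 \<le> f z \<and> f z \<le> 1"
  unfolding B1p_def by auto

lemma B1p_compl: "f \<in> B1p M \<Longrightarrow> (\<lambda>z. 1 - f z) \<in> B1p M"
  unfolding B1p_def by auto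

lemma geom_bound:
  assumes "0 \<le> (\<gamma>::real)" "\<gamma> < 1"
  shows "(\<Sum>j<k. \<gamma> ^ j) \<le> 1 / (1 - \<gamma>)"
proof -
  have "(\<Sum>j<k. \<gamma> ^ j) = (1 - \<gamma> ^ k) / (1 - \<gamma>)" using assms by (simp add: sum_gp_strict)
  also have "\<dots> \<le> 1 / (1 - \<gamma>)" using assms by (intro divide_right_mono) auto
  finally show ?thesis .
qed

lemma prob_integral_B1p:
  assumes nu: "prob_space \<nu>" "sets \<nu> = sets M" and f: "f \<in> B1p M"
  shows "integrable \<nu> f" "0 \<le> (\<integral>y. f y \<partial>\<nu>)" "(\<integral>y. f y \<partial>\<nu>) \<le> 1"
    "(\<integral>y. 1 - f y \<partial>\<nu>) = 1 - (\<integral>y. f y \<partial>\<nu>)"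
proof -
  interpret nu: prob_space \<nu> by (rule nu(1))
  have spn: "space \<nu> = space M" using nu(2) by (rule sets_eq_imp_space_eq)
  have fm: "f \<in> borel_measurable M" using f unfolding B1p_def by simp
  have fmn: "f \<in> borel_measurable \<nu>" by (subst measurable_cong_sets[OF nu(2) refl]) (rule fm)
  show i: "integrable \<nu> f" using B1pD[OF f] spn fmn by (intro nu.integrable_const_bound[of _ 1]) auto
  show "0 \<le> (\<integral>y. f y \<partial>\<nu>)" using B1pD[OF f] spn by (intro Bochner_Integration.integral_nonneg) auto
  have "(\<integral>y. f y \<partial>\<nu>) \<le> (\<integral>y. 1 \<partial>\<nu>)" using B1pD[OF f] spn i by (intro integral_mono) auto
  then show "(\<integral>y. f y \<partial>\<nu>) \<le> 1" using nu.prob_space by simp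
  show "(\<integral>y. 1 - f y \<partial>\<nu>) = 1 - (\<integral>y. f y \<partial>\<nu>)" using i nu.prob_space by simp
qed

lemma sandwich:
  assumes P: "op_ok M P" and nu: "prob_space \<nu>" "sets \<nu> = sets M" and Cs: "Cs \<subseteq> space M"
    and minor: "\<And>f x. f \<in> B1p M \<Longrightarrow> x \<in> Cs \<Longrightarrow> \<alpha> * (\<integral>y. f y \<partial>\<nu>) \<le> P f x"
    and a0: "0 \<le> \<alpha>" and f: "f \<in> B1p M" and z: "z \<in> space M"
  shows "\<alpha> * (\<integral>y. f y \<partial>\<nu>) * indicator Cs z \<le> P f z"
    "P f z \<le> 1 - \<alpha> * (1 - (\<integral>y. f y \<partial>\<nu>)) * indicator Cs z"
proof -
  have fb: "bm M f" by (rule B1p_bm[OF f])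
  have f1: "(\<lambda>z. 1 - f z) \<in> B1p M" by (rule B1p_compl[OF f])
  have P0: "0 \<le> P f z" using op_ok_nonneg[OF P fb _ z] B1pD[OF f] by simp
  have P1: "P f z \<le> 1"
    using op_okD(5)[OF P fb bm_const _ z, of 1] op_okD(4)[OF P z, of 1] B1pD[OF f] by simp
  have Pc: "P (\<lambda>z. 1 - f z) z = 1 - P f z"
    using op_ok_minus[OF P bm_const fb z, of 1] op_okD(4)[OF P z, of 1] by simp
  show "\<alpha> * (\<integral>y. f y \<partial>\<nu>) * indicator Cs z \<le> P f z"
  proof (cases "z \<in> Cs")
    case True then show ?thesis using minor[OF f True] by simp
  qed (simp add: P0)
  show "P f z \<le> 1 - \<alpha> * (1 - (\<integral>y. f y \<partial>\<nu>)) * indicator Cs z"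
  proof (cases "z \<in> Cs")
    case True then show ?thesis using minor[OF f1 True] Pc prob_integral_B1p(4)[OF nu f] by simp
  qed (simp add: P1)
qed

lemma op_ok_lin2:
  assumes "op_ok M Q" "bm M f" "bm M g" "x \<in> space M"
  shows "Q (\<lambda>z. a * f z + b * g z) x = a * Q f x + b * Q g x"
  using op_okD(2)[OF assms(1) bm_mult[OF assms(2)] bm_mult[OF assms(3)] assms(4), of a b]
    op_okD(3)[OF assms(1) assms(2) assms(4), of a] op_okD(3)[OF assms(1) assms(3) assms(4), of b] by simp

lemma telescope:
  assumes P: "op_ok M P" and u: "bm M u" and u0: "\<And>z. z \<in> space M \<Longrightarrow> 0 \<le> u z"
    and w: "bm M w" and le: "\<And>z. z \<in> space M \<Longrightarrow> P u z \<le> \<gamma> * u z + w z" and y: "y \<in> space M"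
  shows "(\<Sum>k<m. (P^^k) u y) - u y \<le> \<gamma> * (\<Sum>k<m. (P^^k) u y) + (\<Sum>k<m. (P^^k) w y)"
proof -
  have step: "(P^^Suc k) u y \<le> \<gamma> * (P^^k) u y + (P^^k) w y" for k
  proof -
    have Pk: "op_ok M (P^^k)" by (rule op_ok_funpow[OF P])
    have "(P^^Suc k) u y = (P^^k) (P u) y" by (simp add: funpow_Suc_right del: funpow.simps)
    also have "\<dots> \<le> (P^^k) (\<lambda>z. \<gamma> * u z + 1 * w z) y"
      using le by (intro op_okD(5)[OF Pk op_okD(1)[OF P u] _ _ y] bm_add bm_mult u w) simp_all
    also have "\<dots> = \<gamma> * (P^^k) u y + (P^^k) w y"
      using op_ok_lin2[OF Pk u w y, of \<gamma> 1] by simp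
    finally show ?thesis .
  qed
  have "(\<Sum>k<m. (P^^k) u y) - u y \<le> (\<Sum>k<Suc m. (P^^k) u y) - u y"
    using op_ok_nonneg[OF op_ok_funpow[OF P] u u0 y, of m] by simp
  also have "\<dots> = (\<Sum>k<m. (P^^Suc k) u y)"
    by (subst sum.lessThan_Suc_shift) simp
  also have "\<dots> \<le> (\<Sum>k<m. \<gamma> * (P^^k) u y + (P^^k) w y)"
    by (intro sum_mono step)
  also have "\<dots> = \<gamma> * (\<Sum>k<m. (P^^k) u y) + (\<Sum>k<m. (P^^k) w y)"
    by (simp add: sum.distrib sum_distrib_left)
  finally show ?thesis .
qed

lemma bulk:
  fixes V :: "'a \<Rightarrow> real"
  assumes m: "finite_measure m" "sets m = sets M" and V: "V \<in> borel_measurable M"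
    and pos: "0 < measure m (space m)"
  shows "\<exists>M0. measure m (space m) / 2 < measure m {x \<in> space M. V x < M0}"
proof -
  interpret finite_measure m by (rule m(1))
  have sp: "space m = space M" using m(2) by (rule sets_eq_imp_space_eq)
  define A where "A = (\<lambda>i::nat. {x \<in> space M. V x < real i})"
  have "A i \<in> sets M" for i unfolding A_def using V by measurable
  then have As: "range A \<subseteq> sets m" using m(2) by auto
  have inc: "incseq A" unfolding A_def incseq_def by auto
  have U: "(\<Union>i. A i) = space m"
  proof
    show "(\<Union>i. A i) \<subseteq> space m" unfolding A_def sp by auto
    show "space m \<subseteq> (\<Union>i. A i)"
    proof
      fix x assume "x \<in> space m"
      moreover obtain i where "V x < real i" by (metis reals_Archimedean2)
      ultimately show "x \<in> (\<Union>i. A i)" unfolding A_def sp by auto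
    qed
  qed
  have "(\<lambda>i. measure m (A i)) \<longlonglongrightarrow> measure m (space m)"
    using finite_Lim_measure_incseq[OF As inc] U by simp
  moreover have "measure m (space m) / 2 < measure m (space m)" using pos by simp
  ultimately have "eventually (\<lambda>i. measure m (space m) / 2 < measure m (A i)) sequentially"
    by (rule order_tendstoD)
  then obtain i where "measure m (space m) / 2 < measure m (A i)"
    by (metis (mono_tags) eventually_sequentially order_refl)
  then show ?thesis unfolding A_def by (intro exI[of _ "real i"])
qed

lemma integral_pos:
  fixes n0 :: nat
  assumes m: "finite_measure m" "sets m = sets M" and G: "G \<in> sets M" "0 < measure m G"
    and c: "0 < c" and F: "\<And>n. n0 \<le> n \<Longrightarrow> bm M (F n)"
    and F0: "\<And>n z. n0 \<le> n \<Longrightarrow> z \<in> space M \<Longrightarrow> 0 \<le> F n z"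
    and Fc: "\<And>n z. n0 \<le> n \<Longrightarrow> z \<in> G \<Longrightarrow> c \<le> F n z"
  shows "0 < (INF n\<in>{n0..}. \<integral>y. F n y \<partial>m)"
proof -
  interpret finite_measure m by (rule m(1))
  have sp: "space m = space M" using m(2) by (rule sets_eq_imp_space_eq)
  have Gs: "G \<subseteq> space M" using G(1) sets.sets_into_space by blast
  have lb0: "c * measure m G \<le> (\<integral>y. F n y \<partial>m)" if n: "n0 \<le> n" for n
  proof -
    obtain B where B: "\<forall>x\<in>space M. \<bar>F n x\<bar> \<le> B" and Fm: "F n \<in> borel_measurable M"
      using F[OF n] unfolding bm_def by blast
    have Fmm: "F n \<in> borel_measurable m" by (subst measurable_cong_sets[OF m(2) refl]) (rule Fm)
    have iF: "integrable m (F n)" using B sp Fmm by (intro integrable_const_bound[of _ B]) auto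
    have "emeasure m G < \<infinity>" using emeasure_finite[of G] by (simp add: less_top[symmetric])
    then have iG: "integrable m (\<lambda>y. c * indicator G y)" using G m(2) by simp
    have "c * measure m G = (\<integral>y. c * indicator G y \<partial>m)" using G m(2) by simp
    also have "\<dots> \<le> (\<integral>y. F n y \<partial>m)"
    proof (rule integral_mono[OF iG iF])
      fix y assume "y \<in> space m"
      then show "c * indicator G y \<le> F n y" using Fc[OF n] F0[OF n] sp by (cases "y \<in> G") auto
    qed
    finally show ?thesis .
  qed
  have lb: "c * measure m G \<le> (\<integral>y. F n y \<partial>m)" if "n \<in> {n0..}" for n
    using lb0 that by simp
  have ne: "{n0..} \<noteq> {}" using atLeast_iff[of n0 n0] by (metis empty_iff order_refl)
  have "c * measure m G \<le> (INF n\<in>{n0..}. \<integral>y. F n y \<partial>m)"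
    by (rule cINF_greatest[OF ne lb])
  moreover have "0 < c * measure m G" using c G by simp
  ultimately show ?thesis by linarith
qed


lemma funpow_indicator_compl:
  assumes P: "op_ok M P" and A: "A \<in> sets M" and x: "x \<in> space M"
  shows "(P^^k) (indicator (space M - A)) x = 1 - (P^^k) (indicator A) x"
proof -
  have Pk: "op_ok M (P^^k)" by (rule op_ok_funpow[OF P])
  have "(P^^k) (indicator (space M - A)) x = (P^^k) (\<lambda>z. 1 - indicator A z) x"
    using A by (intro op_ok_cong[OF Pk bm_indicator _ x]) (auto simp: indicator_def)
  also have "\<dots> = 1 - (P^^k) (indicator A) x"
    using op_ok_minus[OF Pk bm_const bm_indicator[OF A] x, of 1] op_okD(4)[OF Pk x, of 1] by simp
  finally show ?thesis .
qed

lemma markov_drift: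
  fixes V :: "'a \<Rightarrow> real"
  assumes P: "op_ok M P" and dr: "drift M P V \<gamma> (\<lambda>_. b)" and g0: "0 \<le> \<gamma>" and b0: "0 \<le> b"
    and V: "V \<in> borel_measurable M" and V0: "\<And>x. x\<in>space M \<Longrightarrow> 0 \<le> V x"
    and L: "0 < L" and z: "z \<in> space M"
  shows "(P^^k) (indicator {x\<in>space M. L < V x}) z \<le> (\<gamma>^k * V z + b * (\<Sum>j<k. \<gamma>^j)) / L"
proof -
  have Gt: "{x\<in>space M. L < V x} \<in> sets M" using V by measurable
  have "(P^^k) (indicator {x\<in>space M. L < V x}) z \<le> (1/L) * (\<gamma>^k * V z + b * (\<Sum>j<k. \<gamma>^j)) + 0"
  proof (rule driftD[OF drift_funpow[OF P dr g0 b0] _ _ bm_indicator[OF Gt] _ _ z])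
    fix y assume y: "y \<in> space M"
    show "indicator {x \<in> space M. L < V x} y \<le> 1 / L * V y + 0"
      using L V0[OF y] by (auto simp: indicator_def field_simps)
  qed (use L in auto)
  then show ?thesis by simp
qed

lemma hitA:
  fixes V :: "'a \<Rightarrow> real"
  assumes P: "op_ok M P" and dr: "drift M P V \<gamma> (\<lambda>_. b)" and g: "0 < \<gamma>" "\<gamma> < 1" and b: "0 \<le> b"
    and V: "V \<in> borel_measurable M" and V0: "\<And>x. x\<in>space M \<Longrightarrow> 0 \<le> V x"
    and r: "b / (1-\<gamma>) < r"
  shows "\<exists>k0. \<forall>k\<ge>k0. \<forall>z\<in>space M. V z < N \<longrightarrow>
           (r - b/(1-\<gamma>)) / (2*r) \<le> (P^^k) (indicator {x\<in>space M. V x \<le> r}) z"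
proof -
  define B where "B = b / (1-\<gamma>)"
  have B0: "0 \<le> B" unfolding B_def using b g by simp
  have r0: "0 < r" using r B0 unfolding B_def by linarith
  define \<epsilon> where "\<epsilon> = (r - B) / 2"
  have e0: "0 < \<epsilon>" unfolding \<epsilon>_def B_def using r by simp
  have "0 < \<epsilon> / (\<bar>N\<bar> + 1)" using e0 by simp
  from real_arch_pow_inv[OF this g(2)] obtain k0 where k0: "\<gamma> ^ k0 < \<epsilon> / (\<bar>N\<bar> + 1)" by blast
  have Gt: "{x\<in>space M. r < V x} \<in> sets M" using V by measurable
  have Cs: "{x\<in>space M. V x \<le> r} = space M - {x\<in>space M. r < V x}" by auto
  show ?thesis
  proof (intro exI[of _ k0] allI impI ballI)
    fix k z assume k: "k0 \<le> k" and z: "z \<in> space M" and Vz: "V z < N"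
    have "\<gamma> ^ k \<le> \<gamma> ^ k0" using k g by (intro power_decreasing) auto
    moreover have "V z \<le> \<bar>N\<bar> + 1" using Vz by simp
    ultimately have "\<gamma> ^ k * V z \<le> \<gamma> ^ k0 * (\<bar>N\<bar> + 1)"
      using V0[OF z] g by (intro mult_mono) auto
    also have "\<dots> < \<epsilon>" using k0 by (simp add: field_simps)
    finally have gk: "\<gamma> ^ k * V z < \<epsilon>" .
    have sb: "b * (\<Sum>j<k. \<gamma>^j) \<le> B"
      unfolding B_def using geom_bound[of \<gamma> k] g b by (simp add: mult_left_mono divide_inverse)
    have "(P^^k) (indicator {x\<in>space M. r < V x}) z \<le> (\<gamma>^k * V z + b * (\<Sum>j<k. \<gamma>^j)) / r"
      by (rule markov_drift[OF P dr _ b V V0 r0 z]) (use g in simp)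
    also have "\<dots> \<le> (\<epsilon> + B) / r" using gk sb r0 by (intro divide_right_mono) auto
    finally have "(P^^k) (indicator {x\<in>space M. r < V x}) z \<le> (\<epsilon> + B) / r" .
    then have "1 - (\<epsilon> + B) / r \<le> (P^^k) (indicator {x\<in>space M. V x \<le> r}) z"
      unfolding Cs using funpow_indicator_compl[OF P Gt z, of k] by simp
    moreover have "1 - (\<epsilon> + B) / r = (r - B) / (2 * r)" unfolding \<epsilon>_def using r0 by (simp add: field_simps)
    ultimately show "(r - b/(1-\<gamma>)) / (2*r) \<le> (P^^k) (indicator {x\<in>space M. V x \<le> r}) z"
      unfolding B_def by simp
  qed
qed


lemma bm_minV:
  fixes V :: "'a \<Rightarrow> real"
  assumes V: "V \<in> borel_measurable M" and V0: "\<And>x. x\<in>space M \<Longrightarrow> 0 \<le> V x" and L: "0 \<le> L"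
  shows "bm M (\<lambda>z. min (V z) L)"
  unfolding bm_def
proof (intro conjI exI[of _ L] ballI)
  show "(\<lambda>z. min (V z) L) \<in> borel_measurable M" using V by (intro borel_measurable_min) auto
  fix x assume "x \<in> space M" then show "\<bar>min (V x) L\<bar> \<le> L" using V0 L by (auto simp: min_def)
qed

lemma op_ok_sum_lin2:
  assumes "op_ok M Q" "bm M f" "bm M g" "x \<in> space M"
  shows "(\<Sum>k<m. (Q^^k) (\<lambda>z. a * f z + c * g z) x) = a * (\<Sum>k<m. (Q^^k) f x) + c * (\<Sum>k<m. (Q^^k) g x)"
  using op_ok_lin2[OF op_ok_funpow[OF assms(1)] assms(2,3,4)] by (simp add: sum.distrib sum_distrib_left)

lemma hitAp_key:
  fixes V :: "'a \<Rightarrow> real"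
  assumes P: "op_ok M P" and dr: "drift M P V \<gamma> (\<lambda>z. b * indicator S z)" and g: "0 < \<gamma>" "\<gamma> < 1"
    and b: "1 \<le> b" and S: "S \<in> sets M"
    and V: "V \<in> borel_measurable M" and V1: "\<And>x. x\<in>space M \<Longrightarrow> 1 \<le> V x"
    and y: "y \<in> space M" and Vy: "V y < N"
  shows "(1-\<gamma>) * real m / 2 - N \<le> b * (\<Sum>k<m. (P^^k) (indicator S) y)"
proof -
  have V0: "\<And>x. x\<in>space M \<Longrightarrow> 0 \<le> V x" using V1 by (meson order_trans zero_le_one)
  have drc: "drift M P V \<gamma> (\<lambda>_. b)"
    by (rule drift_mono[OF dr]) (use b in \<open>auto simp: indicator_def\<close>)
  define B where "B = b / (1-\<gamma>)"
  have B0: "0 \<le> B" unfolding B_def using b g by simp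
  define L where "L = 2 * (\<bar>N\<bar> + B) + 1"
  have L0: "0 < L" unfolding L_def using B0 by simp
  define Gt where "Gt = {x\<in>space M. L < V x}"
  have Gt: "Gt \<in> sets M" unfolding Gt_def using V by measurable
  define u where "u = (\<lambda>z. min (V z) L)"
  have u: "bm M u" unfolding u_def using bm_minV[OF V V0] L0 by simp
  have u0: "\<And>z. z \<in> space M \<Longrightarrow> 0 \<le> u z" unfolding u_def using V0 L0 by simp
  define w where "w = (\<lambda>z. b * indicator S z + ((1-\<gamma>) * L) * indicator Gt z)"
  have w: "bm M w" unfolding w_def by (intro bm_add bm_mult bm_indicator S Gt)
  have le: "P u z \<le> \<gamma> * u z + w z" if z: "z \<in> space M" for z
  proof -
    have d1: "P u z \<le> 1 * (\<gamma> * V z + b * indicator S z) + 0"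
      by (rule driftD[OF dr _ _ u u0 _ z]) (auto simp: u_def)
    have d2: "P u z \<le> L"
      using op_okD(5)[OF P u bm_const _ z, of L] op_okD(4)[OF P z, of L] by (simp add: u_def)
    show ?thesis
    proof (cases "V z \<le> L")
      case True
      then show ?thesis using d1 z by (simp add: u_def w_def Gt_def)
    next
      case False
      then have "u z = L" "indicator Gt z = (1::real)" using z by (auto simp: u_def Gt_def)
      moreover have "0 \<le> b * indicator S z" using b by simp
      ultimately show ?thesis using d2 unfolding w_def by (simp add: algebra_simps)
    qed
  qed
  define A where "A = (\<Sum>k<m. (P^^k) u y)"
  define I where "I = (\<Sum>k<m. (P^^k) (indicator S) y)"
  define J where "J = (\<Sum>k<m. (P^^k) (indicator Gt) y)"
  have tel: "A - u y \<le> \<gamma> * A + (b * I + ((1-\<gamma>) * L) * J)"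
    using telescope[OF P u u0 w le y, of m] op_ok_sum_lin2[OF P bm_indicator[OF S] bm_indicator[OF Gt] y, where m=m and a=b and c="(1-\<gamma>) * L"]
    unfolding A_def I_def J_def w_def by simp
  have half: "1/2 \<le> (P^^k) u y - L * (P^^k) (indicator Gt) y" for k
  proof -
    have Pk: "op_ok M (P^^k)" by (rule op_ok_funpow[OF P])
    have "(P^^k) (indicator Gt) y \<le> (\<gamma>^k * V y + b * (\<Sum>j<k. \<gamma>^j)) / L"
      unfolding Gt_def by (rule markov_drift[OF P drc _ _ V V0 L0 y]) (use g b in auto)
    also have "\<dots> \<le> (\<bar>N\<bar> + B) / L"
    proof (intro divide_right_mono add_mono)
      have "\<gamma>^k \<le> 1" using g by (simp add: power_le_one)
      then have "\<gamma>^k * V y \<le> 1 * V y" using V0[OF y] by (intro mult_right_mono) auto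
      then show "\<gamma>^k * V y \<le> \<bar>N\<bar>" using Vy by simp
      show "b * (\<Sum>j<k. \<gamma>^j) \<le> B"
        unfolding B_def using geom_bound[of \<gamma> k] g b by (simp add: mult_left_mono divide_inverse)
    qed (use L0 in auto)
    also have "\<dots> \<le> 1/2" unfolding L_def using B0 by (simp add: field_simps)
    finally have Gk: "(P^^k) (indicator Gt) y \<le> 1/2" .
    have "(P^^k) (indicator (space M - Gt)) y \<le> (P^^k) (\<lambda>z. 1 * u z + (-L) * indicator Gt z) y"
    proof (rule op_okD(5)[OF Pk bm_indicator _ _ y])
      show "space M - Gt \<in> sets M" using Gt by auto
      show "bm M (\<lambda>z. 1 * u z + - L * indicator Gt z)" by (intro bm_add bm_mult u bm_indicator Gt)
      fix z assume z: "z \<in> space M"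
      show "indicator (space M - Gt) z \<le> 1 * u z + - L * indicator Gt z"
        using V1[OF z] z by (auto simp: u_def Gt_def indicator_def)
    qed
    also have "\<dots> = (P^^k) u y - L * (P^^k) (indicator Gt) y"
      using op_ok_lin2[OF Pk u bm_indicator[OF Gt] y, of 1 "-L"] by simp
    finally show ?thesis using funpow_indicator_compl[OF P Gt y, of k] Gk by simp
  qed
  have "real m / 2 \<le> A - L * J"
  proof -
    have "(\<Sum>k<m. (1::real)/2) \<le> (\<Sum>k<m. (P^^k) u y - L * (P^^k) (indicator Gt) y)"
      by (intro sum_mono half)
    then show ?thesis unfolding A_def J_def by (simp add: sum_subtractf sum_distrib_left)
  qed
  then have "(1-\<gamma>) * (real m / 2) \<le> (1-\<gamma>) * (A - L * J)" using g by (intro mult_left_mono) auto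
  moreover have "u y \<le> N" using Vy by (simp add: u_def)
  moreover have "(1-\<gamma>) * (A - L * J) = A - \<gamma> * A - (1-\<gamma>) * L * J" by (simp add: algebra_simps)
  ultimately have "(1-\<gamma>) * (real m / 2) \<le> N + b * I" using tel by linarith
  then show ?thesis unfolding I_def by simp
qed


lemma hitAp:
  fixes V :: "'a \<Rightarrow> real"
  assumes P: "op_ok M P" and dr: "drift M P V \<gamma> (\<lambda>z. b * indicator S z)" and g: "0 < \<gamma>" "\<gamma> < 1"
    and b: "1 \<le> b" and S: "S \<in> sets M"
    and V: "V \<in> borel_measurable M" and V1: "\<And>x. x\<in>space M \<Longrightarrow> 1 \<le> V x"
  shows "\<exists>n0. 0 < n0 \<and> (\<forall>n\<ge>n0. \<forall>z\<in>space M. V z < N \<longrightarrow>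
           (1-\<gamma>)/(4*b) \<le> (1/real n) * (\<Sum>k<n-1. (P^^k) (indicator S) z))"
proof (intro exI[of _ "nat \<lceil>4*\<bar>N\<bar>/(1-\<gamma>)\<rceil> + 3"] conjI allI impI ballI)
  fix n z assume n: "nat \<lceil>4*\<bar>N\<bar>/(1-\<gamma>)\<rceil> + 3 \<le> n" and z: "z \<in> space M" and Vz: "V z < N"
  have n1: "4*\<bar>N\<bar>/(1-\<gamma>) + 2 \<le> real n - 1" using n by linarith
  then have npos: "0 < real n" using g by (smt (verit) divide_nonneg_pos abs_ge_zero)
  have n1': "1 \<le> n" using n by simp
  define I where "I = (\<Sum>k<n-1. (P^^k) (indicator S) z)"
  have key: "(1-\<gamma>) * real (n-1) / 2 - N \<le> b * I"
    unfolding I_def by (rule hitAp_key[OF P dr g b S V V1 z Vz])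
  have rn: "real (n-1) = real n - 1" using n1' by simp
  have "4*\<bar>N\<bar> \<le> (1-\<gamma>) * (real n - 2)"
  proof -
    have "4*\<bar>N\<bar>/(1-\<gamma>) \<le> real n - 2" using n1 by simp
    then show ?thesis using g by (simp add: field_simps)
  qed
  then have "(1-\<gamma>) * real n / 4 \<le> b * I" using key rn by (simp add: algebra_simps)
  then show "(1-\<gamma>)/(4*b) \<le> 1 / real n * I" using npos b by (simp add: field_simps)
qed simp


lemma hitB_key:
  fixes V :: "'a \<Rightarrow> real"
  assumes P: "op_ok M P" and dr: "drift M P V 1 (\<lambda>z. b * indicator C z - 1)"
    and b: "1 \<le> b" and C: "C \<in> sets M"
    and V: "V \<in> borel_measurable M" and V0: "\<And>x. x\<in>space M \<Longrightarrow> 0 \<le> V x"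
    and y: "y \<in> space M"
  shows "real n - 1/2 - V y \<le> b * (\<Sum>k<n. (P^^k) (indicator C) y)"
proof -
  have drc: "drift M P V 1 (\<lambda>_. b)"
    by (rule drift_mono[OF dr]) (use b in \<open>auto simp: indicator_def\<close>)
  define L where "L = 2 * real n * (V y + b * real n) + 1"
  have "0 \<le> 2 * real n * (V y + b * real n)" using V0[OF y] b by simp
  then have L0: "0 < L" unfolding L_def by linarith
  define Gt where "Gt = {x\<in>space M. L < V x}"
  have Gt: "Gt \<in> sets M" unfolding Gt_def using V by measurable
  define u where "u = (\<lambda>z. min (V z) L)"
  have u: "bm M u" unfolding u_def using bm_minV[OF V V0] L0 by simp
  have u0: "\<And>z. z \<in> space M \<Longrightarrow> 0 \<le> u z" unfolding u_def using V0 L0 by simp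
  have g1: "bm M (\<lambda>z. indicator Gt z - 1)" by (intro bm_minus bm_indicator Gt bm_const)
  define w where "w = (\<lambda>z. b * indicator C z + 1 * (indicator Gt z - 1))"
  have w: "bm M w" unfolding w_def by (intro bm_add bm_mult bm_indicator C g1)
  have le: "P u z \<le> 1 * u z + w z" if z: "z \<in> space M" for z
  proof -
    have d1: "P u z \<le> 1 * (1 * V z + (b * indicator C z - 1)) + 0"
      by (rule driftD[OF dr _ _ u u0 _ z]) (auto simp: u_def)
    have d2: "P u z \<le> L"
      using op_okD(5)[OF P u bm_const _ z, of L] op_okD(4)[OF P z, of L] by (simp add: u_def)
    show ?thesis
    proof (cases "V z \<le> L")
      case True
      then show ?thesis using d1 z by (simp add: u_def w_def Gt_def)
    next
      case False
      then have "u z = L" "indicator Gt z = (1::real)" using z by (auto simp: u_def Gt_def)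
      moreover have "0 \<le> b * indicator C z" using b by simp
      ultimately show ?thesis using d2 unfolding w_def by (simp add: algebra_simps)
    qed
  qed
  define A where "A = (\<Sum>k<n. (P^^k) u y)"
  define I where "I = (\<Sum>k<n. (P^^k) (indicator C) y)"
  define J where "J = (\<Sum>k<n. (P^^k) (indicator Gt) y)"
  have wsum: "(\<Sum>k<n. (P^^k) w y) = b * I + (J - real n)"
  proof -
    have "(\<Sum>k<n. (P^^k) w y) = b * I + 1 * (\<Sum>k<n. (P^^k) (\<lambda>z. indicator Gt z - 1) y)"
      unfolding w_def I_def by (rule op_ok_sum_lin2[OF P bm_indicator[OF C] g1 y])
    also have "(\<Sum>k<n. (P^^k) (\<lambda>z. indicator Gt z - 1) y) = (\<Sum>k<n. (P^^k) (indicator Gt) y - 1)"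
    proof (rule sum.cong[OF refl])
      fix k
      show "(P^^k) (\<lambda>z. indicator Gt z - 1) y = (P^^k) (indicator Gt) y - 1"
        using op_ok_minus[OF op_ok_funpow[OF P] bm_indicator[OF Gt] bm_const y, of k 1]
          op_okD(4)[OF op_ok_funpow[OF P] y, of k 1] by simp
    qed
    also have "\<dots> = J - real n" unfolding J_def by (simp add: sum_subtractf)
    finally show ?thesis by simp
  qed
  have tel: "A - u y \<le> 1 * A + (b * I + (J - real n))"
    using telescope[OF P u u0 w le y, of n] wsum unfolding A_def by simp
  have Jb: "J \<le> 1/2"
  proof -
    have "(P^^k) (indicator Gt) y \<le> (V y + b * real n) / L" if k: "k \<in> {..<n}" for k
    proof -
      have "(P^^k) (indicator Gt) y \<le> (1^k * V y + b * (\<Sum>j<k. 1^j)) / L"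
        unfolding Gt_def by (rule markov_drift[OF P drc _ _ V V0 L0 y]) (use b in auto)
      also have "\<dots> \<le> (V y + b * real n) / L"
        using k b L0 by (intro divide_right_mono) auto
      finally show ?thesis .
    qed
    then have "J \<le> (\<Sum>k<n. (V y + b * real n) / L)" unfolding J_def by (intro sum_mono) auto
    also have "\<dots> = real n * (V y + b * real n) / L" by simp
    also have "\<dots> \<le> 1/2"
      using L0 V0[OF y] b unfolding L_def by (simp add: field_simps)
    finally show ?thesis .
  qed
  have "u y \<le> V y" by (simp add: u_def)
  then show ?thesis using tel Jb unfolding I_def by linarith
qed

lemma hitB:
  fixes V :: "'a \<Rightarrow> real"
  assumes P: "op_ok M P" and dr: "drift M P V 1 (\<lambda>z. b * indicator C z - 1)"
    and b: "1 \<le> b" and C: "C \<in> sets M"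
    and V: "V \<in> borel_measurable M" and V0: "\<And>x. x\<in>space M \<Longrightarrow> 0 \<le> V x"
  shows "\<exists>n0::nat. 0 < n0 \<and> (\<forall>n\<ge>n0. \<forall>z\<in>space M. V z < N \<longrightarrow>
           1/(2*b) \<le> (1/real n) * (\<Sum>k<n. (P^^k) (indicator C) z))"
proof (intro exI[of _ "nat \<lceil>2*\<bar>N\<bar>\<rceil> + 2"] conjI allI impI ballI)
  fix n z assume n: "nat \<lceil>2*\<bar>N\<bar>\<rceil> + 2 \<le> n" and z: "z \<in> space M" and Vz: "V z < N"
  have n1: "2*\<bar>N\<bar> + 1 \<le> real n" using n by linarith
  have npos: "0 < real n" using n by simp
  define I where "I = (\<Sum>k<n. (P^^k) (indicator C) z)"
  have key: "real n - 1/2 - V z \<le> b * I"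
    unfolding I_def by (rule hitB_key[OF P dr b C V V0 z])
  then have "real n / 2 \<le> b * I" using n1 Vz by linarith
  then show "1/(2*b) \<le> 1 / real n * I" using npos b by (simp add: field_simps)
qed simp


lemma apply_sandwich:
  assumes R: "op_ok M R" and y: "y \<in> space M" and h: "bm M h" and C: "C \<in> sets M"
    and lo: "\<And>z. z \<in> space M \<Longrightarrow> e * indicator C z \<le> h z"
    and hi: "\<And>z. z \<in> space M \<Longrightarrow> h z \<le> 1 - e' * indicator C z"
  shows "e * R (indicator C) y \<le> R h y" "R h y \<le> 1 - e' * R (indicator C) y"
proof -
  have "e * R (indicator C) y = R (\<lambda>z. e * indicator C z) y"
    using op_okD(3)[OF R bm_indicator[OF C] y] by simp
  also have "\<dots> \<le> R h y" using lo by (intro op_okD(5)[OF R bm_mult[OF bm_indicator[OF C]] h _ y])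
  finally show "e * R (indicator C) y \<le> R h y" .
  have "R h y \<le> R (\<lambda>z. 1 * 1 + (-e') * indicator C z) y"
    using hi by (intro op_okD(5)[OF R h _ _ y] bm_add bm_mult bm_indicator C bm_const) simp_all
  also have "\<dots> = 1 * R (\<lambda>z. 1) y + (-e') * R (indicator C) y"
    by (rule op_ok_lin2[OF R bm_const bm_indicator[OF C] y])
  finally show "R h y \<le> 1 - e' * R (indicator C) y" using op_okD(4)[OF R y, of 1] by simp
qed

locale minor_setup =
  fixes M P \<nu> Cs \<alpha>
  assumes P: "op_ok M P" and nu: "prob_space \<nu>" "sets \<nu> = sets M" and Cs: "Cs \<in> sets M"
    and minor: "\<And>f x. f \<in> B1p M \<Longrightarrow> x \<in> Cs \<Longrightarrow> \<alpha> * (\<integral>y. f y \<partial>\<nu>) \<le> P f x"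
    and a0: "0 \<le> \<alpha>"
begin

lemma Cs_sub: "Cs \<subseteq> space M" using Cs sets.sets_into_space by blast

lemma power_sandwich:
  assumes f: "f \<in> B1p M" and y: "y \<in> space M" and n: "0 < n"
  shows "\<alpha> * (\<integral>y. f y \<partial>\<nu>) * (P^^(n-1)) (indicator Cs) y \<le> (P^^n) f y"
    "(P^^n) f y \<le> 1 - \<alpha> * (1 - (\<integral>y. f y \<partial>\<nu>)) * (P^^(n-1)) (indicator Cs) y"
proof -
  have eq: "(P^^n) f y = (P^^(n-1)) (P f) y"
  proof -
    have "n = Suc (n-1)" using n by simp
    then have "(P^^n) f = (P^^(n-1)) (P f)" by (metis comp_apply funpow_Suc_right)
    then show ?thesis by simp
  qed
  note sw = sandwich[OF P nu Cs_sub minor a0 f]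
  have R: "op_ok M (P^^(n-1))" by (rule op_ok_funpow[OF P])
  have h: "bm M (P f)" by (rule op_okD(1)[OF P B1p_bm[OF f]])
  show "\<alpha> * (\<integral>y. f y \<partial>\<nu>) * (P^^(n-1)) (indicator Cs) y \<le> (P^^n) f y"
    unfolding eq using apply_sandwich(1)[OF R y h Cs sw] by simp
  show "(P^^n) f y \<le> 1 - \<alpha> * (1 - (\<integral>y. f y \<partial>\<nu>)) * (P^^(n-1)) (indicator Cs) y"
    unfolding eq using apply_sandwich(2)[OF R y h Cs sw] by simp
qed

lemma cesaro_sandwich:
  assumes f: "f \<in> B1p M" and y: "y \<in> space M" and n: "0 < n"
  shows "\<alpha> * (\<integral>y. f y \<partial>\<nu>) * ((1/real n) * (\<Sum>k<n-1. (P^^k) (indicator Cs) y)) \<le> savg P n f y"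
    "savg P n f y \<le> 1 - \<alpha> * (1 - (\<integral>y. f y \<partial>\<nu>)) * ((1/real n) * (\<Sum>k<n-1. (P^^k) (indicator Cs) y))"
proof -
  define a where "a = (\<integral>y. f y \<partial>\<nu>)"
  define T where "T = (\<Sum>k<n-1. (P^^k) (indicator Cs) y)"
  have eq: "savg P n f y = (1/real n) * (f y + (\<Sum>k<n-1. (P^^k) (P f) y))"
  proof -
    have nn: "n = Suc (n-1)" using n by simp
    have "(\<Sum>k<n. (P^^k) f y) = (\<Sum>k<Suc (n-1). (P^^k) f y)" using nn by simp
    also have "\<dots> = f y + (\<Sum>k<n-1. (P^^Suc k) f y)" by (subst sum.lessThan_Suc_shift) simp
    also have "(\<Sum>k<n-1. (P^^Suc k) f y) = (\<Sum>k<n-1. (P^^k) (P f) y)"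
      by (intro sum.cong refl) (simp add: funpow_Suc_right del: funpow.simps)
    finally show ?thesis unfolding savg_def by simp
  qed
  note sw = sandwich[OF P nu Cs_sub minor a0 f]
  have h: "bm M (P f)" by (rule op_okD(1)[OF P B1p_bm[OF f]])
  have lo: "\<alpha> * a * (P^^k) (indicator Cs) y \<le> (P^^k) (P f) y" for k
    unfolding a_def using apply_sandwich(1)[OF op_ok_funpow[OF P] y h Cs sw] by simp
  have hi: "(P^^k) (P f) y \<le> 1 - \<alpha> * (1 - a) * (P^^k) (indicator Cs) y" for k
    unfolding a_def using apply_sandwich(2)[OF op_ok_funpow[OF P] y h Cs sw] by simp
  have fy: "0 \<le> f y" "f y \<le> 1" using B1pD[OF f y] by auto
  have n1: "real (n-1) = real n - 1" using n by simp
  have "\<alpha> * a * T \<le> (\<Sum>k<n-1. (P^^k) (P f) y)"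
    unfolding T_def sum_distrib_left by (intro sum_mono lo)
  then have "\<alpha> * a * T \<le> f y + (\<Sum>k<n-1. (P^^k) (P f) y)" using fy by linarith
  then have "(1/real n) * (\<alpha> * a * T) \<le> savg P n f y" unfolding eq using n by (intro mult_left_mono) auto
  then show "\<alpha> * (\<integral>y. f y \<partial>\<nu>) * ((1/real n) * (\<Sum>k<n-1. (P^^k) (indicator Cs) y)) \<le> savg P n f y"
    unfolding a_def T_def by (simp add: algebra_simps)
  have "(\<Sum>k<n-1. (P^^k) (P f) y) \<le> (\<Sum>k<n-1. 1 - \<alpha> * (1 - a) * (P^^k) (indicator Cs) y)"
    by (intro sum_mono hi)
  also have "\<dots> = real (n-1) - \<alpha> * (1 - a) * T" unfolding T_def by (simp add: sum_subtractf sum_distrib_left)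
  finally have "f y + (\<Sum>k<n-1. (P^^k) (P f) y) \<le> real n - \<alpha> * (1 - a) * T" using fy n1 by linarith
  then have "savg P n f y \<le> (1/real n) * (real n - \<alpha> * (1 - a) * T)" unfolding eq using n by (intro mult_left_mono) auto
  also have "\<dots> = 1 - \<alpha> * (1 - a) * ((1/real n) * T)" using n by (simp add: field_simps)
  finally show "savg P n f y \<le> 1 - \<alpha> * (1 - (\<integral>y. f y \<partial>\<nu>)) * ((1/real n) * (\<Sum>k<n-1. (P^^k) (indicator Cs) y))"
    unfolding a_def T_def .
qed

end

lemma assmC'_intro:
  assumes Q: "op_ok M Q" and nu: "prob_space \<nu>" "sets \<nu> = sets M" and C: "C \<in> sets M"
    and \<beta>: "0 < \<beta>" "\<beta> \<le> 1"
    and up: "\<And>f x. f \<in> B1p M \<Longrightarrow> x \<in> C \<Longrightarrow> Q f x \<le> \<beta> * (\<integral>y. f y \<partial>\<nu>) + (1 - \<beta>)"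
    and G: "G \<in> sets M" "0 < measure \<nu> G" and c: "0 < c"
    and rec: "\<And>j z. j0 \<le> j \<Longrightarrow> z \<in> G \<Longrightarrow> c \<le> (Q^^j) (indicator C) z"
  shows "assmC' M Q"
proof -
  interpret nu: prob_space \<nu> by (rule nu(1))
  have fm: "finite_measure \<nu>" by (rule nu.finite_measure_axioms)
  have Gs: "G \<subseteq> space M" using G(1) sets.sets_into_space by blast
  have pos: "0 < (INF n\<in>{2*j0+1..}. \<integral>y. savg Q n (indicator C) y \<partial>\<nu>)"
  proof (rule integral_pos[OF fm nu(2) G _])
    show "0 < c/2" using c by simp
    fix n assume n: "2*j0+1 \<le> n"
    have "0 < n" using n by simp
    then show "bm M (savg Q n (indicator C))" by (intro op_okD(1)[OF op_ok_savg[OF Q] bm_indicator[OF C]])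
    fix z
    show "z \<in> space M \<Longrightarrow> 0 \<le> savg Q n (indicator C) z"
      using n by (intro op_ok_nonneg[OF op_ok_savg[OF Q] bm_indicator[OF C]]) auto
    assume z: "z \<in> G"
    have "(\<Sum>j\<in>{j0..<n}. c) \<le> (\<Sum>j\<in>{j0..<n}. (Q^^j) (indicator C) z)"
      using rec z by (intro sum_mono) auto
    also have "\<dots> \<le> (\<Sum>j<n. (Q^^j) (indicator C) z)"
      using op_ok_nonneg[OF op_ok_funpow[OF Q] bm_indicator[OF C] _ ] Gs z
      by (intro sum_mono2) auto
    finally have "real (n - j0) * c \<le> (\<Sum>j<n. (Q^^j) (indicator C) z)" by simp
    moreover have "real n / 2 \<le> real (n - j0)" using n by linarith
    ultimately have "real n / 2 * c \<le> (\<Sum>j<n. (Q^^j) (indicator C) z)"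
      using c by (meson mult_right_mono less_imp_le order_trans)
    then show "c/2 \<le> savg Q n (indicator C) z" unfolding savg_def using n by (simp add: field_simps)
  qed
  show ?thesis unfolding assmC'_def
  proof (intro exI[of _ \<nu>] exI[of _ C] exI[of _ "\<lambda>t. \<beta> * t"] exI[of _ "1 - \<beta>"] conjI)
    show "continuous_on {0..} (\<lambda>t::real. \<beta> * t)" by (intro continuous_intros)
    show "\<forall>t\<ge>0. 0 \<le> \<beta> * t" using \<beta> by simp
    show "\<forall>f\<in>B1p M. \<forall>x\<in>C. Q f x \<le> \<beta> * (\<integral>y. f y \<partial>\<nu>) + (1 - \<beta>)" using up by blast
    show "\<exists>n0. 0 < n0 \<and> 0 < (INF n\<in>{n0..}. \<integral>y. savg Q n (indicator C) y \<partial>\<nu>)"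
      using pos by (intro exI[of _ "2*j0+1"]) simp
  qed (use fm nu C \<beta> in auto)
qed


lemma drift_savg:
  fixes V :: "'a \<Rightarrow> real"
  assumes P: "op_ok M P" and dr: "drift M P V \<gamma> (\<lambda>_. b)" and g: "0 < \<gamma>" "\<gamma> < 1" and b: "0 \<le> b"
    and V0: "\<And>x. x\<in>space M \<Longrightarrow> 0 \<le> V x" and n: "2 / (1-\<gamma>) \<le> real n"
  shows "drift M (savg P n) V (1/2) (\<lambda>_. b / (1-\<gamma>))"
  unfolding drift_def
proof (intro allI impI)
  fix c d g x assume c: "0 \<le> (c::real)" and d: "0 \<le> (d::real)" and gm: "bm M g"
    and gb: "\<forall>z\<in>space M. 0 \<le> g z \<and> g z \<le> c * V z + d" and x: "x \<in> space M"
  define B where "B = b / (1-\<gamma>)"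
  have npos: "0 < real n" using n g by (smt (verit) divide_pos_pos)
  have each: "(P^^k) g x \<le> c * \<gamma>^k * V x + (c * B + d)" for k
  proof -
    have "(P^^k) g x \<le> c * (\<gamma>^k * V x + b * (\<Sum>j<k. \<gamma>^j)) + d"
      using driftD[OF drift_funpow[OF P dr _ b] c d gm _ _ x] gb g by simp
    also have "b * (\<Sum>j<k. \<gamma>^j) \<le> B"
      unfolding B_def using geom_bound[of \<gamma> k] g b by (simp add: mult_left_mono divide_inverse)
    then have "c * (\<gamma>^k * V x + b * (\<Sum>j<k. \<gamma>^j)) + d \<le> c * (\<gamma>^k * V x + B) + d"
      using c by (simp add: mult_left_mono)
    finally show ?thesis by (simp add: algebra_simps)
  qed
  have "savg P n g x = (1/real n) * (\<Sum>k<n. (P^^k) g x)" unfolding savg_def by simp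
  also have "\<dots> \<le> (1/real n) * (\<Sum>k<n. c * \<gamma>^k * V x + (c * B + d))"
    using npos by (intro mult_left_mono sum_mono each) auto
  also have "\<dots> = (c * V x) * ((\<Sum>k<n. \<gamma>^k) / real n) + (c * B + d)"
    using npos by (simp add: sum.distrib sum_distrib_left sum_distrib_right field_simps)
  also have "\<dots> \<le> (c * V x) * (1/2) + (c * B + d)"
  proof -
    have "(\<Sum>k<n. \<gamma>^k) \<le> 1 / (1-\<gamma>)" using geom_bound[of \<gamma> n] g by simp
    also have "\<dots> \<le> real n / 2" using n g by (simp add: field_simps)
    finally have "(\<Sum>k<n. \<gamma>^k) / real n \<le> 1/2" using npos by (simp add: field_simps)
    then show ?thesis using c V0[OF x] by (intro add_right_mono mult_left_mono) auto
  qed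
  finally show "savg P n g x \<le> c * (1/2 * V x + b / (1-\<gamma>)) + d"
    unfolding B_def by (simp add: algebra_simps)
qed

lemma setupA:
  fixes V :: "'a \<Rightarrow> real"
  assumes K: "markov_kernel M K" and A: "assmA M K V"
  obtains b \<gamma> r \<alpha> \<nu> where "V \<in> borel_measurable M" "\<And>x. x\<in>space M \<Longrightarrow> 0 \<le> V x" "0 \<le> b"
    "0 < \<gamma>" "\<gamma> < 1" "b/(1-\<gamma>) < r" "0 < \<alpha>" "\<alpha> \<le> 1"
    "minor_setup M (kop K) \<nu> {x\<in>space M. V x \<le> r} \<alpha>" "drift M (kop K) V \<gamma> (\<lambda>_. b)"
proof -
  have V: "V \<in> borel_measurable M" and V0: "\<forall>x\<in>space M. 0 \<le> V x"
    using A unfolding assmA_def by simp_all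
  have "\<exists>b \<gamma> r. 0 \<le> b \<and> 0 < \<gamma> \<and> \<gamma> < 1 \<and>
        (\<forall>x\<in>space M. (\<integral>\<^sup>+ y. ennreal (V y) \<partial>K x) \<le> ennreal (\<gamma> * V x + b)) \<and>
        r > 2 * b / (1 - \<gamma>) \<and> small_set M K {x\<in>space M. V x \<le> r}"
    using A unfolding assmA_def by simp
  then obtain b \<gamma> r where H: "0 \<le> b \<and> 0 < \<gamma> \<and> \<gamma> < 1 \<and>
        (\<forall>x\<in>space M. (\<integral>\<^sup>+ y. ennreal (V y) \<partial>K x) \<le> ennreal (\<gamma> * V x + b)) \<and>
        r > 2 * b / (1 - \<gamma>) \<and> small_set M K {x\<in>space M. V x \<le> r}"
    by (elim exE)
  have b: "0 \<le> b" and g: "0 < \<gamma>" "\<gamma> < 1"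
    and dr0: "\<forall>x\<in>space M. (\<integral>\<^sup>+ y. ennreal (V y) \<partial>K x) \<le> ennreal (\<gamma> * V x + b)"
    and r: "r > 2 * b / (1 - \<gamma>)" and sm: "small_set M K {x\<in>space M. V x \<le> r}"
    using H by simp_all
  obtain \<alpha> \<nu> where Cs: "{x\<in>space M. V x \<le> r} \<in> sets M" and a: "0 < \<alpha>" "\<alpha> \<le> 1"
    and nu: "prob_space \<nu>" "sets \<nu> = sets M"
    and le: "\<forall>x\<in>{x\<in>space M. V x \<le> r}. \<forall>A\<in>sets M. \<alpha> * measure \<nu> A \<le> measure (K x) A"
  proof -
    have "\<exists>\<alpha> \<nu>. 0 < \<alpha> \<and> \<alpha> \<le> 1 \<and> prob_space \<nu> \<and> sets \<nu> = sets M \<and>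
        (\<forall>x\<in>{x\<in>space M. V x \<le> r}. \<forall>A\<in>sets M. \<alpha> * measure \<nu> A \<le> measure (K x) A)"
      using sm unfolding small_set_def by simp
    then obtain \<alpha> \<nu> where H2: "0 < \<alpha> \<and> \<alpha> \<le> 1 \<and> prob_space \<nu> \<and> sets \<nu> = sets M \<and>
        (\<forall>x\<in>{x\<in>space M. V x \<le> r}. \<forall>A\<in>sets M. \<alpha> * measure \<nu> A \<le> measure (K x) A)" by (elim exE)
    have "{x\<in>space M. V x \<le> r} \<in> sets M" using sm unfolding small_set_def by simp
    with H2 show ?thesis by (intro that[of \<alpha> \<nu>]) simp_all
  qed
  have r': "b/(1-\<gamma>) < r"
  proof -
    have "0 \<le> b/(1-\<gamma>)" using b g by simp
    then have "b/(1-\<gamma>) \<le> 2 * b / (1-\<gamma>)" by simp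
    then show ?thesis using r by linarith
  qed
  have ms: "minor_setup M (kop K) \<nu> {x\<in>space M. V x \<le> r} \<alpha>"
  proof (rule minor_setup.intro)
    show "op_ok M (kop K)" by (rule op_ok_kop[OF K])
    fix f x assume f: "f \<in> B1p M" and x: "x \<in> {x\<in>space M. V x \<le> r}"
    have xs: "x \<in> space M" using x by simp
    have lex: "\<And>A. A \<in> sets M \<Longrightarrow> \<alpha> * measure \<nu> A \<le> measure (K x) A" using le x by simp
    show "\<alpha> * (\<integral>y. f y \<partial>\<nu>) \<le> kop K f x"
      by (rule minor_kop[OF K _ nu(1) nu(2) lex xs f]) (use a in simp)
  qed (use nu Cs a in simp_all)
  have dr: "drift M (kop K) V \<gamma> (\<lambda>_. b)"
    by (rule drift_kop[OF K V]) (use V0 g b dr0 in simp_all)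
  show ?thesis by (rule that[OF V _ b g r' a ms dr]) (use V0 in simp)
qed

lemma setupAp:
  fixes V :: "'a \<Rightarrow> real"
  assumes K: "markov_kernel M K" and A: "assmA' M K V"
  obtains b \<gamma> S \<alpha> \<nu> where "V \<in> borel_measurable M" "\<And>x. x\<in>space M \<Longrightarrow> 1 \<le> V x" "1 \<le> b"
    "0 < \<gamma>" "\<gamma> < 1" "0 < \<alpha>" "\<alpha> \<le> 1" "S \<in> sets M"
    "minor_setup M (kop K) \<nu> S \<alpha>" "drift M (kop K) V \<gamma> (\<lambda>z. b * indicator S z)"
proof -
  have V: "V \<in> borel_measurable M" and V1: "\<forall>x\<in>space M. 1 \<le> V x"
    using A unfolding assmA'_def by simp_all
  have "\<exists>b \<gamma> S. 0 \<le> b \<and> 0 < \<gamma> \<and> \<gamma> < 1 \<and> small_set M K S \<and>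
        (\<forall>x\<in>space M. (\<integral>\<^sup>+ y. ennreal (V y) \<partial>K x) \<le> ennreal (\<gamma> * V x + b * indicator S x))"
    using A unfolding assmA'_def by simp
  then obtain b \<gamma> S where H: "0 \<le> b \<and> 0 < \<gamma> \<and> \<gamma> < 1 \<and> small_set M K S \<and>
        (\<forall>x\<in>space M. (\<integral>\<^sup>+ y. ennreal (V y) \<partial>K x) \<le> ennreal (\<gamma> * V x + b * indicator S x))"
    by (elim exE)
  have b: "0 \<le> b" and g: "0 < \<gamma>" "\<gamma> < 1" and sm: "small_set M K S"
    and dr0: "\<forall>x\<in>space M. (\<integral>\<^sup>+ y. ennreal (V y) \<partial>K x) \<le> ennreal (\<gamma> * V x + b * indicator S x)"
    using H by simp_all
  obtain \<alpha> \<nu> where S: "S \<in> sets M" and a: "0 < \<alpha>" "\<alpha> \<le> 1"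
    and nu: "prob_space \<nu>" "sets \<nu> = sets M"
    and le: "\<forall>x\<in>S. \<forall>A\<in>sets M. \<alpha> * measure \<nu> A \<le> measure (K x) A"
  proof -
    have "\<exists>\<alpha> \<nu>. 0 < \<alpha> \<and> \<alpha> \<le> 1 \<and> prob_space \<nu> \<and> sets \<nu> = sets M \<and>
        (\<forall>x\<in>S. \<forall>A\<in>sets M. \<alpha> * measure \<nu> A \<le> measure (K x) A)"
      using sm unfolding small_set_def by simp
    then obtain \<alpha> \<nu> where H2: "0 < \<alpha> \<and> \<alpha> \<le> 1 \<and> prob_space \<nu> \<and> sets \<nu> = sets M \<and>
        (\<forall>x\<in>S. \<forall>A\<in>sets M. \<alpha> * measure \<nu> A \<le> measure (K x) A)" by (elim exE)
    have "S \<in> sets M" using sm unfolding small_set_def by simp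
    with H2 show ?thesis by (intro that[of \<alpha> \<nu>]) simp_all
  qed
  have Ssub: "S \<subseteq> space M" using S sets.sets_into_space by blast
  have ms: "minor_setup M (kop K) \<nu> S \<alpha>"
  proof (rule minor_setup.intro)
    show "op_ok M (kop K)" by (rule op_ok_kop[OF K])
    fix f x assume f: "f \<in> B1p M" and x: "x \<in> S"
    have xs: "x \<in> space M" using x Ssub by auto
    have lex: "\<And>A. A \<in> sets M \<Longrightarrow> \<alpha> * measure \<nu> A \<le> measure (K x) A" using le x by simp
    show "\<alpha> * (\<integral>y. f y \<partial>\<nu>) \<le> kop K f x"
      by (rule minor_kop[OF K _ nu(1) nu(2) lex xs f]) (use a in simp)
  qed (use nu S a in simp_all)
  have V0: "\<And>x. x\<in>space M \<Longrightarrow> 0 \<le> V x" using V1 by (meson order_trans zero_le_one)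
  have dr: "drift M (kop K) V \<gamma> (\<lambda>z. b * indicator S z)"
    by (rule drift_kop[OF K V]) (use V0 g b dr0 in simp_all)
  have dr': "drift M (kop K) V \<gamma> (\<lambda>z. max b 1 * indicator S z)"
    by (rule drift_mono[OF dr]) (auto simp: indicator_def)
  show ?thesis by (rule that[OF V _ _ g a S ms dr']) (use V1 in simp_all)
qed


lemma combine_bounds:
  fixes \<alpha> a c t1 t2 u1 u2 :: real
  assumes "0 \<le> \<alpha>" "0 \<le> a" "a \<le> 1" "c \<le> t1" "c \<le> t2"
    and "u1 \<le> 1 - \<alpha> * (1 - a) * t1" "\<alpha> * a * t2 \<le> u2"
  shows "u1 \<le> u2 + (1 - \<alpha> * c)"
proof -
  have "\<alpha> * (1 - a) * c \<le> \<alpha> * (1 - a) * t1" using assms by (intro mult_left_mono) auto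
  moreover have "\<alpha> * a * c \<le> \<alpha> * a * t2" using assms by (intro mult_left_mono) auto
  moreover have "\<alpha> * (1 - a) * c + \<alpha> * a * c = \<alpha> * c" by (simp add: algebra_simps)
  ultimately show ?thesis using assms by linarith
qed

lemma partI:
  fixes V :: "'a \<Rightarrow> real"
  assumes K: "markov_kernel M K" and A: "assmA M K V"
  shows "\<exists>n0::nat. n0 > 0 \<and> (\<exists>\<delta>. 0 \<le> \<delta> \<and> \<delta> < 1 \<and>
          (\<forall>n n' x y f. n0 \<le> n \<longrightarrow> n0 \<le> n' \<longrightarrow>
             x \<in> {z\<in>space M. V z < N} \<longrightarrow> y \<in> {z\<in>space M. V z < N} \<longrightarrow> f \<in> B1p M \<longrightarrow>
             (kop K ^^ n) f y \<le> (kop K ^^ n') f x + \<delta>))"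
proof -
  obtain b \<gamma> r \<alpha> \<nu> where V: "V \<in> borel_measurable M" and V0: "\<And>x. x\<in>space M \<Longrightarrow> 0 \<le> V x"
    and b: "0 \<le> b" and g: "0 < \<gamma>" "\<gamma> < 1" and r: "b/(1-\<gamma>) < r" and a: "0 < \<alpha>" "\<alpha> \<le> 1"
    and ms: "minor_setup M (kop K) \<nu> {x\<in>space M. V x \<le> r} \<alpha>" and dr: "drift M (kop K) V \<gamma> (\<lambda>_. b)"
    by (rule setupA[OF K A], rule that) assumption+
  interpret ms: minor_setup M "kop K" \<nu> "{x\<in>space M. V x \<le> r}" \<alpha> by (rule ms)
  define c where "c = (r - b/(1-\<gamma>)) / (2*r)"
  have B0: "0 \<le> b/(1-\<gamma>)" using b g by simp
  have r0: "0 < r" using r B0 by linarith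
  have c0: "0 < c" unfolding c_def using r r0 by simp
  have c1: "c \<le> 1" unfolding c_def using r0 B0 by (simp add: field_simps)
  obtain k0 where k0: "\<forall>k\<ge>k0. \<forall>z\<in>space M. V z < N \<longrightarrow> c \<le> (kop K^^k) (indicator {x\<in>space M. V x \<le> r}) z"
    using hitA[OF ms.P dr g b V V0 r, of N] unfolding c_def by blast
  have ac1: "\<alpha> * c \<le> 1" using a c1 c0 by (metis mult_le_one less_imp_le)
  show ?thesis
  proof (intro exI[of _ "Suc k0"] conjI exI[of _ "1 - \<alpha> * c"] allI impI)
    show "0 \<le> 1 - \<alpha> * c" using ac1 by simp
    show "1 - \<alpha> * c < 1" using a c0 by simp
    show "0 < Suc k0" by simp
    fix n n' x y f
    assume n: "Suc k0 \<le> n" and n': "Suc k0 \<le> n'" and x: "x \<in> {z\<in>space M. V z < N}"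
      and y: "y \<in> {z\<in>space M. V z < N}" and f: "f \<in> B1p M"
    have xs: "x \<in> space M" "V x < N" and ys: "y \<in> space M" "V y < N" using x y by auto
    have t1: "c \<le> (kop K^^(n-1)) (indicator {x\<in>space M. V x \<le> r}) y" using k0 n ys by simp
    have t2: "c \<le> (kop K^^(n'-1)) (indicator {x\<in>space M. V x \<le> r}) x" using k0 n' xs by simp
    show "(kop K ^^ n) f y \<le> (kop K ^^ n') f x + (1 - \<alpha> * c)"
      by (rule combine_bounds[OF _ prob_integral_B1p(2)[OF ms.nu f] prob_integral_B1p(3)[OF ms.nu f] t1 t2
          ms.power_sandwich(2)[OF f ys(1)] ms.power_sandwich(1)[OF f xs(1)]])
        (use a n n' in simp_all)
  qed
qed


lemma partII:
  fixes V :: "'a \<Rightarrow> real"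
  assumes K: "markov_kernel M K" and A: "assmA' M K V"
  shows "\<exists>n0::nat. n0 > 0 \<and> (\<exists>\<delta>. 0 \<le> \<delta> \<and> \<delta> < 1 \<and>
          (\<forall>n n' x y f. n0 \<le> n \<longrightarrow> n0 \<le> n' \<longrightarrow>
             x \<in> {z\<in>space M. V z < N} \<longrightarrow> y \<in> {z\<in>space M. V z < N} \<longrightarrow> f \<in> B1p M \<longrightarrow>
             savg (kop K) n f y \<le> savg (kop K) n' f x + \<delta>))"
proof -
  obtain b \<gamma> S \<alpha> \<nu> where V: "V \<in> borel_measurable M" and V1: "\<And>x. x\<in>space M \<Longrightarrow> 1 \<le> V x"
    and b: "1 \<le> b" and g: "0 < \<gamma>" "\<gamma> < 1" and a: "0 < \<alpha>" "\<alpha> \<le> 1" and S: "S \<in> sets M"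
    and ms: "minor_setup M (kop K) \<nu> S \<alpha>" and dr: "drift M (kop K) V \<gamma> (\<lambda>z. b * indicator S z)"
    by (rule setupAp[OF K A], rule that) assumption+
  interpret ms: minor_setup M "kop K" \<nu> S \<alpha> by (rule ms)
  define c where "c = (1-\<gamma>)/(4*b)"
  have c0: "0 < c" unfolding c_def using g b by simp
  have c1: "c \<le> 1" unfolding c_def using g b by (simp add: field_simps)
  obtain n0 where n00: "0 < n0" and n0: "\<forall>n\<ge>n0. \<forall>z\<in>space M. V z < N \<longrightarrow>
           c \<le> (1/real n) * (\<Sum>k<n-1. (kop K^^k) (indicator S) z)"
    using hitAp[OF ms.P dr g b S V V1, of N] unfolding c_def by blast
  have ac1: "\<alpha> * c \<le> 1" using a c1 c0 by (metis mult_le_one less_imp_le)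
  show ?thesis
  proof (intro exI[of _ n0] conjI exI[of _ "1 - \<alpha> * c"] allI impI)
    show "0 \<le> 1 - \<alpha> * c" using ac1 by simp
    show "1 - \<alpha> * c < 1" using a c0 by simp
    show "0 < n0" by (rule n00)
    fix n n' x y f
    assume n: "n0 \<le> n" and n': "n0 \<le> n'" and x: "x \<in> {z\<in>space M. V z < N}"
      and y: "y \<in> {z\<in>space M. V z < N}" and f: "f \<in> B1p M"
    have xs: "x \<in> space M" "V x < N" and ys: "y \<in> space M" "V y < N" using x y by auto
    have np: "0 < n" "0 < n'" using n n' n00 by auto
    have t1: "c \<le> (1/real n) * (\<Sum>k<n-1. (kop K^^k) (indicator S) y)" using n0 n ys by simp
    have t2: "c \<le> (1/real n') * (\<Sum>k<n'-1. (kop K^^k) (indicator S) x)" using n0 n' xs by simp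
    show "savg (kop K) n f y \<le> savg (kop K) n' f x + (1 - \<alpha> * c)"
      by (rule combine_bounds[OF _ prob_integral_B1p(2)[OF ms.nu f] prob_integral_B1p(3)[OF ms.nu f] t1 t2
          ms.cesaro_sandwich(2)[OF f ys(1) np(1)] ms.cesaro_sandwich(1)[OF f xs(1) np(2)]])
        (use a in simp)
  qed
qed


lemma bulk_prob:
  fixes V :: "'a \<Rightarrow> real"
  assumes nu: "prob_space \<nu>" "sets \<nu> = sets M" and V: "V \<in> borel_measurable M"
  obtains M0 where "{x\<in>space M. V x < M0} \<in> sets M" "0 < measure \<nu> {x\<in>space M. V x < M0}"
proof -
  interpret nu: prob_space \<nu> by (rule nu(1))
  obtain M0 where "measure \<nu> (space \<nu>) / 2 < measure \<nu> {x\<in>space M. V x < M0}"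
    using bulk[OF nu.finite_measure_axioms nu(2) V] nu.prob_space by auto
  moreover have "{x\<in>space M. V x < M0} \<in> sets M" using V by measurable
  ultimately show ?thesis using that nu.prob_space by simp
qed

lemma partCA:
  fixes V :: "'a \<Rightarrow> real"
  assumes K: "markov_kernel M K" and A: "assmA M K V"
  shows "\<exists>n1. \<forall>n\<ge>n1. assmC' M (kop K ^^ n)"
proof -
  obtain b \<gamma> r \<alpha> \<nu> where V: "V \<in> borel_measurable M" and V0: "\<And>x. x\<in>space M \<Longrightarrow> 0 \<le> V x"
    and b: "0 \<le> b" and g: "0 < \<gamma>" "\<gamma> < 1" and r: "b/(1-\<gamma>) < r" and a: "0 < \<alpha>" "\<alpha> \<le> 1"
    and ms: "minor_setup M (kop K) \<nu> {x\<in>space M. V x \<le> r} \<alpha>" and dr: "drift M (kop K) V \<gamma> (\<lambda>_. b)"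
    by (rule setupA[OF K A], rule that) assumption+
  interpret ms: minor_setup M "kop K" \<nu> "{x\<in>space M. V x \<le> r}" \<alpha> by (rule ms)
  define Cs where "Cs = {x\<in>space M. V x \<le> r}"
  define c where "c = (r - b/(1-\<gamma>)) / (2*r)"
  have B0: "0 \<le> b/(1-\<gamma>)" using b g by simp
  have r0: "0 < r" using r B0 by linarith
  have c0: "0 < c" unfolding c_def using r r0 by simp
  have c1: "c \<le> 1" unfolding c_def using r0 B0 by (simp add: field_simps)
  have ac1: "\<alpha> * c \<le> 1" using a c1 c0 by (metis mult_le_one less_imp_le)
  obtain k0 where k0: "\<forall>k\<ge>k0. \<forall>z\<in>space M. V z < r + 1 \<longrightarrow> c \<le> (kop K^^k) (indicator Cs) z"
    using hitA[OF ms.P dr g b V V0 r, of "r+1"] unfolding c_def Cs_def by blast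
  obtain M0 where G: "{x\<in>space M. V x < M0} \<in> sets M" "0 < measure \<nu> {x\<in>space M. V x < M0}"
    by (rule bulk_prob[OF ms.nu V])
  obtain k1 where k1: "\<forall>k\<ge>k1. \<forall>z\<in>space M. V z < M0 \<longrightarrow> c \<le> (kop K^^k) (indicator Cs) z"
    using hitA[OF ms.P dr g b V V0 r, of M0] unfolding c_def Cs_def by blast
  show ?thesis
  proof (intro exI[of _ "Suc k0"] allI impI)
    fix n assume n: "Suc k0 \<le> n"
    show "assmC' M (kop K ^^ n)"
    proof (rule assmC'_intro[OF op_ok_funpow[OF ms.P] ms.nu ms.Cs _ _ _ G c0])
      show "0 < \<alpha> * c" using a c0 by simp
      show "\<alpha> * c \<le> 1" by (rule ac1)
      fix f x assume f: "f \<in> B1p M" and x: "x \<in> {x\<in>space M. V x \<le> r}"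
      have xs: "x \<in> space M" "V x < r + 1" using x by auto
      have t: "c \<le> (kop K^^(n-1)) (indicator Cs) x" using k0 n xs by simp
      have up: "(kop K ^^ n) f x \<le> 1 - \<alpha> * (1 - (\<integral>y. f y \<partial>\<nu>)) * (kop K^^(n-1)) (indicator Cs) x"
        unfolding Cs_def using ms.power_sandwich(2)[OF f xs(1)] n by simp
      have "\<alpha> * (1 - (\<integral>y. f y \<partial>\<nu>)) * c \<le> \<alpha> * (1 - (\<integral>y. f y \<partial>\<nu>)) * (kop K^^(n-1)) (indicator Cs) x"
        using t a prob_integral_B1p(3)[OF ms.nu f] by (intro mult_left_mono) auto
      then show "(kop K ^^ n) f x \<le> \<alpha> * c * (\<integral>y. f y \<partial>\<nu>) + (1 - \<alpha> * c)"
        using up by (simp add: algebra_simps)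
    next
      fix j z assume j: "k1 \<le> j" and z: "z \<in> {x\<in>space M. V x < M0}"
      have "1 \<le> n" using n by simp
      then have "1 * j \<le> n * j" by (rule mult_le_mono1)
      then have "k1 \<le> n * j" using j by linarith
      then have "c \<le> (kop K^^(n*j)) (indicator Cs) z" using k1 z by simp
      then show "c \<le> ((kop K ^^ n) ^^ j) (indicator {x\<in>space M. V x \<le> r}) z"
        unfolding Cs_def by (simp add: funpow_mult)
    qed
  qed
qed


lemma partCAp:
  fixes V :: "'a \<Rightarrow> real"
  assumes K: "markov_kernel M K" and A: "assmA' M K V"
  shows "\<exists>n1. \<forall>n\<ge>n1. assmC' M (savg (kop K) n)"
proof -
  obtain b \<gamma> S \<alpha> \<nu> where V: "V \<in> borel_measurable M" and V1: "\<And>x. x\<in>space M \<Longrightarrow> 1 \<le> V x"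
    and b: "1 \<le> b" and g: "0 < \<gamma>" "\<gamma> < 1" and a: "0 < \<alpha>" "\<alpha> \<le> 1" and S: "S \<in> sets M"
    and ms: "minor_setup M (kop K) \<nu> S \<alpha>" and dr: "drift M (kop K) V \<gamma> (\<lambda>z. b * indicator S z)"
    by (rule setupAp[OF K A], rule that) assumption+
  interpret ms: minor_setup M "kop K" \<nu> S \<alpha> by (rule ms)
  have V0: "\<And>x. x\<in>space M \<Longrightarrow> 0 \<le> V x" using V1 by (meson order_trans zero_le_one)
  have drc: "drift M (kop K) V \<gamma> (\<lambda>_. b)"
    by (rule drift_mono[OF dr]) (use b in \<open>auto simp: indicator_def\<close>)
  define B where "B = b / (1-\<gamma>)"
  have B0: "0 \<le> B" unfolding B_def using b g by simp
  define Ls where "Ls = 8 * B + 1"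
  have Ls0: "0 < Ls" unfolding Ls_def using B0 by simp
  define C where "C = {x\<in>space M. V x \<le> Ls}"
  define Gt where "Gt = {x\<in>space M. Ls < V x}"
  have Gt: "Gt \<in> sets M" unfolding Gt_def using V by measurable
  have C: "C \<in> sets M" unfolding C_def using V by measurable
  have CGt: "C = space M - Gt" unfolding C_def Gt_def by auto
  define c where "c = (1-\<gamma>)/(4*b)"
  have c0: "0 < c" unfolding c_def using g b by simp
  have c1: "c \<le> 1" unfolding c_def using g b by (simp add: field_simps)
  have ac1: "\<alpha> * c \<le> 1" using a c1 c0 by (metis mult_le_one less_imp_le)
  obtain n0 where n00: "0 < n0" and n0: "\<forall>n\<ge>n0. \<forall>z\<in>space M. V z < Ls + 1 \<longrightarrow>
           c \<le> (1/real n) * (\<Sum>k<n-1. (kop K^^k) (indicator S) z)"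
    using hitAp[OF ms.P dr g b S V V1, of "Ls + 1"] unfolding c_def by blast
  obtain M0 where G: "{x\<in>space M. V x < M0} \<in> sets M" "0 < measure \<nu> {x\<in>space M. V x < M0}"
    by (rule bulk_prob[OF ms.nu V])
  show ?thesis
  proof (intro exI[of _ "max n0 (nat \<lceil>2/(1-\<gamma>)\<rceil>)"] allI impI)
    fix n assume n: "max n0 (nat \<lceil>2/(1-\<gamma>)\<rceil>) \<le> n"
    have nn0: "n0 \<le> n" and npos: "0 < n" using n n00 by auto
    have n2: "2/(1-\<gamma>) \<le> real n" using n by linarith
    have Q: "op_ok M (savg (kop K) n)" by (rule op_ok_savg[OF ms.P npos])
    have drQ: "drift M (savg (kop K) n) V (1/2) (\<lambda>_. B)"
      unfolding B_def by (rule drift_savg[OF ms.P drc g _ V0 n2]) (use b in simp)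
    have "0 < (Ls/4) / (\<bar>M0\<bar> + 1)" using Ls0 by simp
    from real_arch_pow_inv[OF this, of "1/2"] obtain j0 where j0: "(1/2::real) ^ j0 < (Ls/4) / (\<bar>M0\<bar> + 1)" by auto
    show "assmC' M (savg (kop K) n)"
    proof (rule assmC'_intro[OF Q ms.nu C _ _ _ G, of "\<alpha> * c" "1/2" j0])
      show "0 < \<alpha> * c" using a c0 by simp
      show "\<alpha> * c \<le> 1" by (rule ac1)
      show "0 < (1/2::real)" by simp
      fix f x assume f: "f \<in> B1p M" and x: "x \<in> C"
      have xs: "x \<in> space M" "V x < Ls + 1" using x unfolding C_def by auto
      have t: "c \<le> (1/real n) * (\<Sum>k<n-1. (kop K^^k) (indicator S) x)" using n0 nn0 xs by simp
      have up: "savg (kop K) n f x \<le> 1 - \<alpha> * (1 - (\<integral>y. f y \<partial>\<nu>)) * ((1/real n) * (\<Sum>k<n-1. (kop K^^k) (indicator S) x))"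
        by (rule ms.cesaro_sandwich(2)[OF f xs(1) npos])
      have "\<alpha> * (1 - (\<integral>y. f y \<partial>\<nu>)) * c \<le> \<alpha> * (1 - (\<integral>y. f y \<partial>\<nu>)) * ((1/real n) * (\<Sum>k<n-1. (kop K^^k) (indicator S) x))"
        using t a prob_integral_B1p(3)[OF ms.nu f] by (intro mult_left_mono) auto
      then show "savg (kop K) n f x \<le> \<alpha> * c * (\<integral>y. f y \<partial>\<nu>) + (1 - \<alpha> * c)"
        using up by (simp add: algebra_simps)
    next
      fix j z assume j: "j0 \<le> j" and z: "z \<in> {x\<in>space M. V x < M0}"
      have zs: "z \<in> space M" "V z < M0" using z by auto
      have "(savg (kop K) n ^^ j) (indicator Gt) z \<le> ((1/2)^j * V z + B * (\<Sum>i<j. (1/2::real)^i)) / Ls"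
        unfolding Gt_def by (rule markov_drift[OF Q drQ _ B0 V V0 Ls0 zs(1)]) simp
      also have "\<dots> \<le> (Ls/4 + Ls/4) / Ls"
      proof (intro divide_right_mono add_mono)
        have "(1/2::real)^j \<le> (1/2)^j0" using j by (intro power_decreasing) auto
        moreover have "V z \<le> \<bar>M0\<bar> + 1" using zs by simp
        ultimately have "(1/2::real)^j * V z \<le> (1/2)^j0 * (\<bar>M0\<bar> + 1)"
          using V0[OF zs(1)] by (intro mult_mono) auto
        also have "\<dots> \<le> Ls/4" using j0 by (simp add: field_simps)
        finally show "(1/2::real)^j * V z \<le> Ls/4" .
        have "(\<Sum>i<j. (1/2::real)^i) \<le> 2" using geom_bound[of "1/2::real" j] by simp
        then have "B * (\<Sum>i<j. (1/2::real)^i) \<le> B * 2" using B0 by (intro mult_left_mono) auto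
        then show "B * (\<Sum>i<j. (1/2::real)^i) \<le> Ls/4" unfolding Ls_def by simp
      qed (use Ls0 in simp)
      also have "\<dots> = 1/2" using Ls0 by simp
      finally have "(savg (kop K) n ^^ j) (indicator Gt) z \<le> 1/2" .
      then show "1/2 \<le> (savg (kop K) n ^^ j) (indicator C) z"
        unfolding CGt using funpow_indicator_compl[OF Q Gt zs(1), of j] by simp
    qed
  qed
qed


lemma ennreal_aux:
  fixes X :: ennreal and t :: real
  assumes "X + 1 \<le> ennreal t"
  shows "1 \<le> t" "X \<le> ennreal (t - 1)"
proof -
  have "1 \<le> X + 1" by (simp add: add_increasing)
  then have "1 \<le> ennreal t" using assms by (rule order_trans)
  then show t1: "1 \<le> t"
  proof (rule contrapos_pp)
    assume "\<not> 1 \<le> t"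
    then have "ennreal t < 1" by (simp add: not_le)
    then show "\<not> 1 \<le> ennreal t" by (simp add: not_le)
  qed
  have "ennreal 1 + ennreal (t - 1) = ennreal (1 + (t - 1))" using t1 by (intro ennreal_plus[symmetric]) auto
  then have "ennreal t = 1 + ennreal (t - 1)" by simp
  then have "1 + X \<le> 1 + ennreal (t - 1)" using assms by (simp add: add.commute)
  then show "X \<le> ennreal (t - 1)" by (simp add: ennreal_add_left_cancel_le)
qed

lemma partIII:
  fixes V :: "'a \<Rightarrow> real"
  assumes K: "markov_kernel M K" and B: "assmB M K V b C"
    and m: "finite_measure m" "sets m = sets M" "emeasure m (space m) \<noteq> 0"
  shows "\<exists>n0::nat. n0 > 0 \<and> (INF n\<in>{n0..}. \<integral>y. savg (kop K) n (indicator C) y \<partial>m) > 0"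
proof -
  have V: "V \<in> borel_measurable M" and V0: "\<And>x. x\<in>space M \<Longrightarrow> 0 \<le> V x" and C: "C \<in> sets M"
    and H: "\<And>x. x\<in>space M \<Longrightarrow> (\<integral>\<^sup>+ y. ennreal (V y) \<partial>K x) + 1 \<le> ennreal (V x + b * indicator C x)"
    using B unfolding assmB_def by simp_all
  define b' where "b' = max b 1"
  have b': "1 \<le> b'" unfolding b'_def by simp
  have H': "(\<integral>\<^sup>+ y. ennreal (V y) \<partial>K x) + 1 \<le> ennreal (1 * V x + (b' * indicator C x - 1) + 1)"
    if x: "x \<in> space M" for x
  proof -
    have "V x + b * indicator C x \<le> 1 * V x + (b' * indicator C x - 1) + 1"
      unfolding b'_def by (auto simp: indicator_def)
    then show ?thesis using H[OF x] by (meson ennreal_leI order_trans)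
  qed
  have dr: "drift M (kop K) V 1 (\<lambda>z. b' * indicator C z - 1)"
  proof (rule drift_kop[OF K V V0])
    fix x assume x: "x \<in> space M"
    show "0 \<le> 1 * V x + (b' * indicator C x - 1)" using ennreal_aux(1)[OF H'[OF x]] by simp
    show "(\<integral>\<^sup>+ y. ennreal (V y) \<partial>K x) \<le> ennreal (1 * V x + (b' * indicator C x - 1))"
      using ennreal_aux(2)[OF H'[OF x]] by (simp add: algebra_simps)
  qed
  interpret fm: finite_measure m by (rule m(1))
  have pos: "0 < measure m (space m)"
    using m(3) fm.emeasure_eq_measure by (simp add: less_le)
  from bulk[OF m(1) m(2) V pos]
  obtain M0 where M0: "measure m (space m) / 2 < measure m {x\<in>space M. V x < M0}"
    by (elim exE)
  have G: "{x\<in>space M. V x < M0} \<in> sets M" using V by measurable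
  have Gpos: "0 < measure m {x\<in>space M. V x < M0}" using M0 pos by linarith
  have "\<exists>n0::nat. 0 < n0 \<and> (\<forall>n\<ge>n0. \<forall>z\<in>space M. V z < M0 \<longrightarrow>
           1/(2*b') \<le> (1/real n) * (\<Sum>k<n. (kop K^^k) (indicator C) z))"
    by (rule hitB[OF op_ok_kop[OF K] dr b' C V]) (rule V0)
  then obtain n0 where n0H: "0 < n0 \<and> (\<forall>n\<ge>n0. \<forall>z\<in>space M. V z < M0 \<longrightarrow>
           1/(2*b') \<le> (1/real n) * (\<Sum>k<n. (kop K^^k) (indicator C) z))"
    by (elim exE)
  have n00: "0 < n0" and n0: "\<forall>n\<ge>n0. \<forall>z\<in>space M. V z < M0 \<longrightarrow>
           1/(2*b') \<le> (1/real n) * (\<Sum>k<n. (kop K^^k) (indicator C) z)"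
    using n0H by simp_all
  have "0 < (INF n\<in>{n0..}. \<integral>y. savg (kop K) n (indicator C) y \<partial>m)"
  proof (rule integral_pos[OF m(1) m(2) G Gpos])
    show "0 < 1/(2*b')" using b' by simp
    fix n assume n: "n0 \<le> n"
    have np: "0 < n" using n n00 by simp
    show "bm M (savg (kop K) n (indicator C))"
      by (rule op_okD(1)[OF op_ok_savg[OF op_ok_kop[OF K] np] bm_indicator[OF C]])
    fix z
    show "z \<in> space M \<Longrightarrow> 0 \<le> savg (kop K) n (indicator C) z"
      by (rule op_ok_nonneg[OF op_ok_savg[OF op_ok_kop[OF K] np] bm_indicator[OF C]]) auto
    assume z: "z \<in> {x\<in>space M. V x < M0}"
    then show "1/(2*b') \<le> savg (kop K) n (indicator C) z" using n0 n unfolding savg_def by simp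
  qed
  then show ?thesis using n00 by (intro exI[of _ n0]) simp
qed


theorem proposition3p7:
  fixes M :: "'a measure" and K :: "'a \<Rightarrow> 'a measure"
  assumes "markov_kernel M K"
  shows
   "(\<forall>V. assmA M K V \<longrightarrow>
       (\<forall>N>0. \<exists>n0::nat. n0 > 0 \<and> (\<exists>\<delta>. 0 \<le> \<delta> \<and> \<delta> < 1 \<and>
          (\<forall>n n' x y f. n0 \<le> n \<longrightarrow> n0 \<le> n' \<longrightarrow>
             x \<in> {z\<in>space M. V z < N} \<longrightarrow> y \<in> {z\<in>space M. V z < N} \<longrightarrow> f \<in> B1p M \<longrightarrow>
             (kop K ^^ n) f y \<le> (kop K ^^ n') f x + \<delta>)))) \<and>
    (\<forall>V. assmA' M K V \<longrightarrow>
       (\<forall>N>0. \<exists>n0::nat. n0 > 0 \<and> (\<exists>\<delta>. 0 \<le> \<delta> \<and> \<delta> < 1 \<and>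
          (\<forall>n n' x y f. n0 \<le> n \<longrightarrow> n0 \<le> n' \<longrightarrow>
             x \<in> {z\<in>space M. V z < N} \<longrightarrow> y \<in> {z\<in>space M. V z < N} \<longrightarrow> f \<in> B1p M \<longrightarrow>
             savg (kop K) n f y \<le> savg (kop K) n' f x + \<delta>)))) \<and>
    (\<forall>V. assmA M K V \<longrightarrow> (\<exists>n1. \<forall>n\<ge>n1. assmC' M (kop K ^^ n))) \<and>
    (\<forall>V. assmA' M K V \<longrightarrow> (\<exists>n1. \<forall>n\<ge>n1. assmC' M (savg (kop K) n))) \<and>
    (\<forall>V b C. assmB M K V b C \<longrightarrow>
       (\<forall>m. finite_measure m \<and> sets m = sets M \<and> emeasure m (space m) \<noteq> 0 \<longrightarrow>
          (\<exists>n0::nat. n0 > 0 \<and> (INF n\<in>{n0..}. \<integral>y. savg (kop K) n (indicator C) y \<partial>m) > 0)))"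
proof -
  have K: "markov_kernel M K" by (rule assms)
  show ?thesis
    apply (intro conjI)
    subgoal by (intro allI impI) (rule partI[OF K], assumption)
    subgoal by (intro allI impI) (rule partII[OF K], assumption)
    subgoal by (intro allI impI) (rule partCA[OF K], assumption)
    subgoal by (intro allI impI) (rule partCAp[OF K], assumption)
    subgoal by (intro allI impI) (elim conjE, rule partIII[OF K], assumption+)
    done
qed

end
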